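(* Let $\gamma,\sigma:[a,b]\to V$ be continuous paths of bounded variation. (1) For $\phi(k)=\Gamma(\frac k2+1)$ the $\phi$-signature kernel is well defined, and there is a constant $C$ such that for all $N$ and $(s,t)$, \[ \left|K_\phi^{\gamma,\sigma}(s,t)-K_\phi^{(N)}(s,t)\right|\le C\left(\frac{e}{2N+2}\right)^{(N+1)/2}e_{N+1}\left(L_s(\gamma)L_t(\sigma)\right),\qquad e_{N+1}(x):=\sum_{k=N+1}^\infty\frac{x^k}{k!}. \] (2) For $m\in\mathbb{R}_+$ and $\phi(k)=\frac{\Gamma(m+1)\Gamma(k+1)}{\Gamma(k+m+1)}$ the $\phi$-signature kernel is well defined and \[ \left|K_\phi^{\gamma,\sigma}(s,t)-K_\phi^{(N)}(s,t)\right|\le\frac{\Gamma(m+1)}{(L_s(\gamma)L_t(\sigma))^{m/2}}\,I_m^{(N+1)}\left(2\sqrt{L_s(\gamma)L_t(\sigma)}\right), \] where $I_m^{(N+1)}(z):=\left(\frac z2\right)^m\sum_{k=N+1}^\infty\frac{(z^2/4)^k}{\Gamma(k+m+1)\Gamma(k+1)}$ is the tail of the series of the modified Bessel function $I_m$.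
   Context: $V$ is a finite-dimensional real inner product space, $\langle\cdot,\cdot\rangle_k$ the induced Hilbert–Schmidt inner product on $V^{\otimes k}$. Signature: $S(\gamma)^0=1$, $S(\gamma)^k_{s,t}=\int_{s<u_1<\dots<u_k<t}d\gamma_{u_1}\otimes\cdots\otimes d\gamma_{u_k}$. $K_\phi^{\gamma,\sigma}(s,t)=\sum_{k\ge0}\phi(k)\langle S(\gamma)^k_{a,s},S(\sigma)^k_{a,t}\rangle_k$ and $K_\phi^{(N)}(s,t)$ is the same sum restricted to $k\le N$. $L_s(\gamma)$ is the length of $\gamma|_{[a,s]}$. *)

theory Defs
  imports "HOL-Analysis.Analysis"
begin

definition is_partition :: "real \<Rightarrow> real \<Rightarrow> real list \<Rightarrow> bool" where
  "is_partition a b xs \<longleftrightarrow> xs \<noteq> [] \<and> hd xs = a \<and> last xs = b \<and> sorted_wrt (<) xs"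

definition is_tagging :: "real list \<Rightarrow> real list \<Rightarrow> bool" where
  "is_tagging xs ts \<longleftrightarrow> length ts + 1 = length xs \<and>
     (\<forall>j < length ts. xs ! j \<le> ts ! j \<and> ts ! j \<le> xs ! Suc j)"

definition mesh_below :: "real list \<Rightarrow> real \<Rightarrow> bool" where
  "mesh_below xs \<delta> \<longleftrightarrow> (\<forall>j. Suc j < length xs \<longrightarrow> xs ! Suc j - xs ! j < \<delta>)"

definition variation_sum :: "(real \<Rightarrow> 'a::real_normed_vector) \<Rightarrow> real list \<Rightarrow> real" where
  "variation_sum \<gamma> xs = (\<Sum>j < length xs - 1. norm (\<gamma> (xs ! Suc j) - \<gamma> (xs ! j)))"

definition bounded_variation_on :: "(real \<Rightarrow> 'a::real_normed_vector) \<Rightarrow> real \<Rightarrow> real \<Rightarrow> bool" where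
  "bounded_variation_on \<gamma> a b \<longleftrightarrow> bdd_above {variation_sum \<gamma> xs | xs. is_partition a b xs}"

definition path_length :: "(real \<Rightarrow> 'a::real_normed_vector) \<Rightarrow> real \<Rightarrow> real \<Rightarrow> real" where
  "path_length \<gamma> a s = Sup {variation_sum \<gamma> xs | xs. is_partition a s xs}"

definition RS_sum :: "(real \<Rightarrow> real) \<Rightarrow> (real \<Rightarrow> real) \<Rightarrow> real list \<Rightarrow> real list \<Rightarrow> real" where
  "RS_sum f g xs ts = (\<Sum>j < length ts. f (ts ! j) * (g (xs ! Suc j) - g (xs ! j)))"

definition has_RS_integral :: "(real \<Rightarrow> real) \<Rightarrow> (real \<Rightarrow> real) \<Rightarrow> real \<Rightarrow> real \<Rightarrow> real \<Rightarrow> bool" where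
  "has_RS_integral f g a b I \<longleftrightarrow>
     (\<forall>\<epsilon>>0. \<exists>\<delta>>0. \<forall>xs ts. is_partition a b xs \<and> is_tagging xs ts \<and> mesh_below xs \<delta> \<longrightarrow>
        \<bar>RS_sum f g xs ts - I\<bar> < \<epsilon>)"

definition RS_integral :: "(real \<Rightarrow> real) \<Rightarrow> (real \<Rightarrow> real) \<Rightarrow> real \<Rightarrow> real \<Rightarrow> real" where
  "RS_integral f g a b = (THE I. has_RS_integral f g a b I)"

text \<open>\<open>sig_rev \<gamma> a w t\<close> is the coordinate of \<open>S(\<gamma>)^k_{a,t}\<close> (k = length w) along
  \<open>e_{i_1} \<otimes> \<dots> \<otimes> e_{i_k}\<close>, where w = [i_k, ..., i_1] is the reversed word:
  \<open>\<integral>_{a<u_1<\<dots><u_k<t} d\<gamma>^{i_1}_{u_1} \<dots> d\<gamma>^{i_k}_{u_k}\<close>, computed by iterating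
  Riemann--Stieltjes integrals.\<close>
fun sig_rev :: "(real \<Rightarrow> 'a::euclidean_space) \<Rightarrow> real \<Rightarrow> 'a list \<Rightarrow> real \<Rightarrow> real" where
  "sig_rev \<gamma> a [] t = 1"
| "sig_rev \<gamma> a (i # w) t = RS_integral (\<lambda>u. sig_rev \<gamma> a w u) (\<lambda>u. \<gamma> u \<bullet> i) a t"

definition sig_coord :: "(real \<Rightarrow> 'a::euclidean_space) \<Rightarrow> real \<Rightarrow> real \<Rightarrow> 'a list \<Rightarrow> real" where
  "sig_coord \<gamma> a t w = sig_rev \<gamma> a (rev w) t"

text \<open>Words of length k over the orthonormal basis: index set of a basis of \<open>V^{\<otimes>k}\<close>.\<close>
definition words :: "nat \<Rightarrow> 'a::euclidean_space list set" where
  "words k = {w. length w = k \<and> set w \<subseteq> Basis}"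

text \<open>Hilbert--Schmidt inner product \<open>\<langle>S(\<gamma>)^k_{a,s}, S(\<sigma>)^k_{a,t}\<rangle>_k\<close>, expanded in the
  orthonormal product basis \<open>{e_{i_1}\<otimes>\<dots>\<otimes>e_{i_k}}\<close>.\<close>
definition sig_inner :: "(real \<Rightarrow> 'a::euclidean_space) \<Rightarrow> (real \<Rightarrow> 'a) \<Rightarrow> real \<Rightarrow> nat \<Rightarrow> real \<Rightarrow> real \<Rightarrow> real" where
  "sig_inner \<gamma> \<sigma> a k s t = (\<Sum>w \<in> words k. sig_coord \<gamma> a s w * sig_coord \<sigma> a t w)"

definition phi_sig_kernel_welldef ::
  "(nat \<Rightarrow> real) \<Rightarrow> (real \<Rightarrow> 'a::euclidean_space) \<Rightarrow> (real \<Rightarrow> 'a) \<Rightarrow> real \<Rightarrow> real \<Rightarrow> real \<Rightarrow> bool" where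
  "phi_sig_kernel_welldef \<phi> \<gamma> \<sigma> a s t \<longleftrightarrow> summable (\<lambda>k. \<phi> k * sig_inner \<gamma> \<sigma> a k s t)"

definition phi_sig_kernel ::
  "(nat \<Rightarrow> real) \<Rightarrow> (real \<Rightarrow> 'a::euclidean_space) \<Rightarrow> (real \<Rightarrow> 'a) \<Rightarrow> real \<Rightarrow> real \<Rightarrow> real \<Rightarrow> real" where
  "phi_sig_kernel \<phi> \<gamma> \<sigma> a s t = (\<Sum>k. \<phi> k * sig_inner \<gamma> \<sigma> a k s t)"

definition phi_sig_kernel_trunc ::
  "(nat \<Rightarrow> real) \<Rightarrow> nat \<Rightarrow> (real \<Rightarrow> 'a::euclidean_space) \<Rightarrow> (real \<Rightarrow> 'a) \<Rightarrow> real \<Rightarrow> real \<Rightarrow> real \<Rightarrow> real" where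
  "phi_sig_kernel_trunc \<phi> N \<gamma> \<sigma> a s t = (\<Sum>k\<le>N. \<phi> k * sig_inner \<gamma> \<sigma> a k s t)"

definition exp_tail :: "nat \<Rightarrow> real \<Rightarrow> real" where
  "exp_tail M x = (\<Sum>j. x ^ (j + M) / fact (j + M))"

definition bessel_I_tail :: "real \<Rightarrow> nat \<Rightarrow> real \<Rightarrow> real" where
  "bessel_I_tail m M z = (z / 2) powr m *
     (\<Sum>j. (z\<^sup>2 / 4) ^ (j + M) / (Gamma (real (j + M) + m + 1) * Gamma (real (j + M) + 1)))"

end

theory Submission
  imports Defs
begin


section \<open>List partitions\<close>

lemma part_nth_less:
  assumes "is_partition a t xs" "i < j" "j < length xs"
  shows "xs ! i < xs ! j"
  using assms sorted_wrt_nth_less unfolding is_partition_def by blast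

lemma part_hd: "is_partition a t xs \<Longrightarrow> xs ! 0 = a"
  unfolding is_partition_def by (metis hd_conv_nth)

lemma part_last: "is_partition a t xs \<Longrightarrow> xs ! (length xs - 1) = t"
  unfolding is_partition_def by (metis last_conv_nth)

lemma part_len: "is_partition a t xs \<Longrightarrow> length xs > 0"
  unfolding is_partition_def by simp

lemma part_nth_range:
  assumes "is_partition a t xs" "i < length xs"
  shows "a \<le> xs ! i \<and> xs ! i \<le> t"
proof -
  have "xs ! 0 \<le> xs ! i"
    using part_nth_less[OF assms(1), of 0 i] assms by (cases "i = 0") auto
  moreover have "xs ! i \<le> xs ! (length xs - 1)"
  proof -
    have "i < length xs - 1 \<or> i = length xs - 1" using assms by linarith
    moreover have "length xs - 1 < length xs" using assms by linarith
    ultimately show ?thesis using part_nth_less[OF assms(1), of i "length xs - 1"] by force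
  qed
  ultimately show ?thesis using part_hd[OF assms(1)] part_last[OF assms(1)] by simp
qed

lemma part_set: "is_partition a t xs \<Longrightarrow> set xs \<subseteq> {a..t}"
  using part_nth_range by (auto simp: in_set_conv_nth)

lemma part_le: "is_partition a t xs \<Longrightarrow> a \<le> t"
  using part_nth_range[of a t xs 0] part_len by force

lemma part_trivial:
  assumes "is_partition a a xs" shows "xs = [a]"
proof -
  have "length xs = 1"
  proof (rule ccontr)
    assume "length xs \<noteq> 1"
    then have "0 < length xs - 1" "length xs - 1 < length xs" using part_len[OF assms] by linarith+
    then have "xs ! 0 < xs ! (length xs - 1)" using part_nth_less[OF assms] by blast
    then show False using part_hd[OF assms] part_last[OF assms] by simp
  qed
  then show ?thesis using assms unfolding is_partition_def
    by (cases xs) auto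
qed

lemma part_append:
  assumes "is_partition a x xs" "x < y"
  shows "is_partition a y (xs @ [y])"
proof -
  have "\<forall>u\<in>set xs. u < y" using part_set[OF assms(1)] assms(2) by auto
  then show ?thesis using assms(1) unfolding is_partition_def
    by (simp add: sorted_wrt_append)
qed

lemma variation_sum_append:
  assumes "xs \<noteq> []"
  shows "variation_sum p (xs @ [z]) = variation_sum p xs + norm (p z - p (last xs))"
proof -
  obtain m where m: "length xs = Suc m" using assms by (cases xs) auto
  have "variation_sum p (xs @ [z]) = (\<Sum>j<Suc m. norm (p ((xs@[z]) ! Suc j) - p ((xs@[z]) ! j)))"
    unfolding variation_sum_def using m by simp
  also have "\<dots> = (\<Sum>j<m. norm (p (xs ! Suc j) - p (xs ! j))) + norm (p z - p (last xs))"
    using m assms by (simp add: nth_append last_conv_nth)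
  also have "(\<Sum>j<m. norm (p (xs ! Suc j) - p (xs ! j))) = variation_sum p xs"
    unfolding variation_sum_def using m by simp
  finally show ?thesis .
qed

lemma uniform_list_partition:
  fixes a t \<delta> :: real
  assumes "a \<le> t" "\<delta> > 0"
  shows "\<exists>xs ts. is_partition a t xs \<and> is_tagging xs ts \<and> mesh_below xs \<delta>"
proof (cases "a = t")
  case True
  then show ?thesis
    by (intro exI[of _ "[a]"] exI[of _ "[]"]) (auto simp: is_partition_def is_tagging_def mesh_below_def)
next
  case False
  then have lt: "a < t" using assms by simp
  obtain n :: nat where n: "(t - a) / \<delta> < n" using reals_Archimedean2 by blast
  then have npos: "n > 0" using lt assms by (cases n) (auto simp: field_simps)
  define u where "u j = a + (t - a) * real j / real n" for j
  define xs where "xs = map u [0..<Suc n]"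
  have len: "length xs = Suc n" by (simp add: xs_def)
  have mono: "u i < u j" if "i < j" for i j
  proof -
    have "(t - a) * real i < (t - a) * real j" using that lt by simp
    then have "(t - a) * real i / n < (t - a) * real j / n"
      using npos by (simp add: divide_strict_right_mono)
    then show ?thesis by (simp add: u_def)
  qed
  have part: "is_partition a t xs"
    unfolding is_partition_def xs_def
  proof (intro conjI)
    show "sorted_wrt (<) (map u [0..<Suc n])"
      unfolding sorted_wrt_map
      by (rule sorted_wrt_mono_rel[OF _ sorted_wrt_upt]) (use mono in auto)
  qed (use npos in \<open>auto simp: u_def hd_map last_map\<close>)
  have xsn: "xs ! j = u j" if "j < Suc n" for j
    using that by (simp add: xs_def del: upt_Suc)
  have tag: "is_tagging xs (take n xs)"
    unfolding is_tagging_def using len xsn mono[of j "Suc j" for j] by (auto intro: less_imp_le)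
  have "(t - a) / real n < \<delta>" using n npos assms lt by (simp add: field_simps)
  moreover have "xs ! Suc j - xs ! j = (t - a) / real n" if "j < n" for j
    using that xsn[of j] xsn[of "Suc j"] npos by (simp add: u_def field_simps)
  ultimately have mesh: "mesh_below xs \<delta>"
    unfolding mesh_below_def using len by auto
  show ?thesis using part tag mesh by blast
qed

section \<open>Path length\<close>

context
  fixes p :: "real \<Rightarrow> 'a::real_normed_vector" and a b :: real
  assumes bv: "bounded_variation_on p a b"
begin

lemma vs_bdd:
  assumes "a \<le> y" "y \<le> b"
  shows "bdd_above {variation_sum p xs | xs. is_partition a y xs}"
proof (cases "y = b")
  case True then show ?thesis using bv unfolding bounded_variation_on_def by simp
next
  case False
  then have yb: "y < b" using assms by simp
  obtain M where M: "\<And>z. z \<in> {variation_sum p xs | xs. is_partition a b xs} \<Longrightarrow> z \<le> M"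
    using bv unfolding bounded_variation_on_def bdd_above_def by blast
  show ?thesis unfolding bdd_above_def
  proof (intro exI[of _ M] ballI)
    fix z assume "z \<in> {variation_sum p xs | xs. is_partition a y xs}"
    then obtain xs where xs: "is_partition a y xs" "z = variation_sum p xs" by blast
    have "is_partition a b (xs @ [b])" using part_append[OF xs(1) yb] .
    then have "variation_sum p (xs @ [b]) \<le> M" using M by blast
    moreover have "variation_sum p (xs @ [b]) = z + norm (p b - p y)"
      using variation_sum_append[of xs p b] xs unfolding is_partition_def by simp
    ultimately show "z \<le> M" using norm_ge_zero[of "p b - p y"] by linarith
  qed
qed

lemma path_length_a: "path_length p a a = 0"
proof -
  have "{variation_sum p xs | xs. is_partition a a xs} = {0}"
  proof -
    have "is_partition a a [a]" by (simp add: is_partition_def)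
    moreover have "variation_sum p [a] = 0" by (simp add: variation_sum_def)
    ultimately show ?thesis
    proof (intro set_eqI iffI)
      fix z assume "z \<in> {variation_sum p xs | xs. is_partition a a xs}"
      then obtain xs where "is_partition a a xs" "z = variation_sum p xs" by blast
      then show "z \<in> {0}" using part_trivial[of a xs] \<open>variation_sum p [a] = 0\<close> by simp
    qed auto
  qed
  then show ?thesis unfolding path_length_def by simp
qed

lemma path_length_mono:
  assumes "a \<le> x" "x \<le> y" "y \<le> b"
  shows "path_length p a x + norm (p y - p x) \<le> path_length p a y"
proof (cases "x = y")
  case True then show ?thesis by simp
next
  case False
  then have xy: "x < y" using assms by simp
  have ne: "{variation_sum p xs | xs. is_partition a x xs} \<noteq> {}"
  proof -
    have "is_partition a x (if a = x then [a] else [a, x])"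
      using assms by (auto simp: is_partition_def)
    then show ?thesis by blast
  qed
  have "path_length p a x \<le> path_length p a y - norm (p y - p x)"
    unfolding path_length_def
  proof (rule cSup_least[OF ne])
    fix z assume "z \<in> {variation_sum p xs | xs. is_partition a x xs}"
    then obtain xs where xs: "is_partition a x xs" "z = variation_sum p xs" by blast
    have pa: "is_partition a y (xs @ [y])" using part_append[OF xs(1) xy] .
    have "variation_sum p (xs @ [y]) = z + norm (p y - p x)"
      using variation_sum_append[of xs p y] xs unfolding is_partition_def by simp
    moreover have "variation_sum p (xs @ [y]) \<le> Sup {variation_sum p xs | xs. is_partition a y xs}"
      by (rule cSup_upper) (use pa vs_bdd[of y] assms in auto)
    ultimately show "z \<le> Sup {variation_sum p xs | xs. is_partition a y xs} - norm (p y - p x)"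
      by simp
  qed
  then show ?thesis by simp
qed

lemma path_length_nonneg:
  assumes "a \<le> y" "y \<le> b" shows "0 \<le> path_length p a y"
  using path_length_mono[of a y] assms path_length_a norm_ge_zero[of "p y - p a"] by linarith

lemma path_length_le:
  assumes "a \<le> x" "x \<le> y" "y \<le> b"
  shows "path_length p a x \<le> path_length p a y"
  using path_length_mono[OF assms] norm_ge_zero[of "p y - p x"] by linarith

end



section \<open>Set partitions\<close>

definition spart :: "real \<Rightarrow> real \<Rightarrow> real set \<Rightarrow> bool" where
  "spart a t S \<longleftrightarrow> finite S \<and> a \<in> S \<and> t \<in> S \<and> S \<subseteq> {a..t}"

definition nx :: "real set \<Rightarrow> real \<Rightarrow> real" where
  "nx S x = Min {y\<in>S. x < y}"

definition pv :: "real set \<Rightarrow> real \<Rightarrow> real" where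
  "pv S x = Max {y\<in>S. y \<le> x}"

definition SS :: "(real \<Rightarrow> real \<Rightarrow> real) \<Rightarrow> real \<Rightarrow> real set \<Rightarrow> real" where
  "SS F t S = (\<Sum>x\<in>S-{t}. F x (nx S x))"

definition LS :: "(real \<Rightarrow> real) \<Rightarrow> (real \<Rightarrow> real) \<Rightarrow> real \<Rightarrow> real set \<Rightarrow> real" where
  "LS f g t S = SS (\<lambda>x x'. f x * (g x' - g x)) t S"

definition sfine :: "real set \<Rightarrow> real \<Rightarrow> real \<Rightarrow> bool" where
  "sfine S t \<delta> \<longleftrightarrow> (\<forall>x\<in>S-{t}. nx S x - x < \<delta>)"

lemma spart_le: "spart a t S \<Longrightarrow> a \<le> t"
  unfolding spart_def by auto

lemma spart_lt: "spart a t S \<Longrightarrow> x \<in> S - {t} \<Longrightarrow> x < t \<and> a \<le> x"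
  unfolding spart_def by force

lemma nx_props:
  assumes "spart a t S" "x \<in> S - {t}"
  shows "nx S x \<in> S \<and> x < nx S x \<and> (\<forall>y\<in>S. x < y \<longrightarrow> nx S x \<le> y)"
proof -
  have fin: "finite {y\<in>S. x < y}" using assms(1) unfolding spart_def by simp
  have ne: "t \<in> {y\<in>S. x < y}" using assms spart_lt[OF assms] unfolding spart_def by auto
  show ?thesis unfolding nx_def using Min_in[OF fin] Min_le[OF fin] ne by auto
qed

lemma nx_eqI:
  assumes "finite S" "y \<in> S" "x < y" "\<And>z. z \<in> S \<Longrightarrow> x < z \<Longrightarrow> y \<le> z"
  shows "nx S x = y"
  unfolding nx_def by (rule Min_eqI) (use assms in auto)

lemma pv_props:
  assumes "spart a t P" "a \<le> x"
  shows "pv P x \<in> P \<and> pv P x \<le> x \<and> (\<forall>y\<in>P. y \<le> x \<longrightarrow> y \<le> pv P x)"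
proof -
  have fin: "finite {y\<in>P. y \<le> x}" using assms(1) unfolding spart_def by simp
  have ne: "a \<in> {y\<in>P. y \<le> x}" using assms unfolding spart_def by auto
  show ?thesis unfolding pv_def using Max_in[OF fin] Max_ge[OF fin] ne by auto
qed

lemma pv_self: "spart a t P \<Longrightarrow> x \<in> P \<Longrightarrow> pv P x = x"
  unfolding pv_def spart_def by (rule Max_eqI) auto

lemma SS_insert:
  assumes S: "spart a t S" and y: "y \<in> {a..t}" "y \<notin> S"
  defines "p \<equiv> Max {x\<in>S. x < y}"
  shows "SS F t (insert y S) = SS F t S - F p (nx S y) + F p y + F y (nx S y)"
    and "nx S p = nx S y" and "p \<in> S" and "p < y"
    and "\<forall>z\<in>S. z < y \<longrightarrow> z \<le> p"
proof -
  have fin: "finite S" and aS: "a \<in> S" and tS: "t \<in> S" and sub: "S \<subseteq> {a..t}"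
    using S unfolding spart_def by auto
  have ay: "a < y" using y aS by (cases "a = y") auto
  have yt: "y < t" using y tS by (cases "y = t") auto
  have finp: "finite {x\<in>S. x < y}" using fin by simp
  have pin: "p \<in> {x\<in>S. x < y}" unfolding p_def by (rule Max_in[OF finp]) (use aS ay in auto)
  have pmax: "\<And>z. z \<in> S \<Longrightarrow> z < y \<Longrightarrow> z \<le> p" unfolding p_def using Max_ge[OF finp] by auto
  show "p \<in> S" "p < y" using pin by auto
  show "\<forall>z\<in>S. z < y \<longrightarrow> z \<le> p" using pmax by auto
  define n where "n = nx S y"
  have S': "spart a t (insert y S)" using S y unfolding spart_def by auto
  have fin': "finite (insert y S)" using fin by simp
  have nfin: "finite {z\<in>S. y < z}" using fin by simp
  have nin: "n \<in> {z\<in>S. y < z}" unfolding n_def nx_def by (rule Min_in[OF nfin]) (use tS yt in auto)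
  have nmin: "\<And>z. z \<in> S \<Longrightarrow> y < z \<Longrightarrow> n \<le> z" unfolding n_def nx_def using Min_le[OF nfin] by auto
  have nxp: "nx S p = n"
  proof (rule nx_eqI[OF fin])
    show "n \<in> S" "p < n" using nin pin by auto
    fix z assume "z \<in> S" "p < z"
    then have "\<not> z < y" using pmax by force
    moreover have "z \<noteq> y" using \<open>z \<in> S\<close> y by auto
    ultimately show "n \<le> z" using nmin \<open>z \<in> S\<close> by auto
  qed
  then show "nx S p = nx S y" by (simp add: n_def)
  have nx'y: "nx (insert y S) y = n"
    by (rule nx_eqI[OF fin']) (use nin nmin in auto)
  have nx'p: "nx (insert y S) p = y"
  proof (rule nx_eqI[OF fin'])
    fix z assume "z \<in> insert y S" "p < z"
    then show "y \<le> z" using pmax by force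
  qed (use pin in auto)
  have nx'x: "nx (insert y S) x = nx S x" if x: "x \<in> S - {t}" "x \<noteq> p" for x
  proof -
    have m: "nx S x \<in> S \<and> x < nx S x \<and> (\<forall>z\<in>S. x < z \<longrightarrow> nx S x \<le> z)"
      using nx_props[OF S x(1)] .
    show ?thesis
    proof (rule nx_eqI[OF fin'])
      fix z assume z: "z \<in> insert y S" "x < z"
      show "nx S x \<le> z"
      proof (cases "z = y")
        case True
        then have "x < p" using pmax[of x] x z by force
        then have "nx S x \<le> p" using m pin by auto
        then show ?thesis using True pin by auto
      next
        case False then show ?thesis using m z by auto
      qed
    qed (use m in auto)
  qed
  have pt: "p \<in> S - {t}" using pin yt by auto
  have eq: "insert y S - {t} = insert y (S - {t})" using yt by auto
  have "SS F t (insert y S) = F y n + (\<Sum>x\<in>S-{t}. F x (nx (insert y S) x))"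
    unfolding SS_def eq using fin y nx'y by (simp add: sum.insert)
  also have "(\<Sum>x\<in>S-{t}. F x (nx (insert y S) x)) = F p y + (\<Sum>x\<in>S-{t}-{p}. F x (nx S x))"
  proof -
    have "(\<Sum>x\<in>S-{t}-{p}. F x (nx (insert y S) x)) = (\<Sum>x\<in>S-{t}-{p}. F x (nx S x))"
      by (rule sum.cong) (use nx'x in auto)
    then show ?thesis
      using sum.remove[of "S-{t}" p "\<lambda>x. F x (nx (insert y S) x)"] fin pt nx'p by simp
  qed
  also have "(\<Sum>x\<in>S-{t}-{p}. F x (nx S x)) = SS F t S - F p n"
    using sum.remove[of "S-{t}" p "\<lambda>x. F x (nx S x)"] fin pt nxp unfolding SS_def by simp
  finally show "SS F t (insert y S) = SS F t S - F p (nx S y) + F p y + F y (nx S y)"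
    by (simp add: n_def)
qed

lemma LS_refine_aux:
  assumes P: "spart a t P" and D: "finite D" "D \<subseteq> {a..t}"
  shows "LS f g t (P \<union> D) = LS f g t P + SS (\<lambda>x x'. (f x - f (pv P x)) * (g x' - g x)) t (P \<union> D)"
  using D
proof (induction D rule: finite_induct)
  case empty
  have "SS (\<lambda>x x'. (f x - f (pv P x)) * (g x' - g x)) t P = 0"
    unfolding SS_def using pv_self[OF P] spart_lt[OF P] by (intro sum.neutral) auto
  then show ?case by simp
next
  case (insert y D)
  let ?S = "P \<union> D"
  have S: "spart a t ?S" using P insert.prems unfolding spart_def using insert.hyps by auto
  have IH: "LS f g t ?S = LS f g t P + SS (\<lambda>x x'. (f x - f (pv P x)) * (g x' - g x)) t ?S"
    using insert by auto
  show ?case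
  proof (cases "y \<in> ?S")
    case True
    then have "P \<union> insert y D = ?S" by auto
    then show ?thesis using IH by simp
  next
    case False
    have yat: "y \<in> {a..t}" using insert.prems by auto
    have eqS: "P \<union> insert y D = insert y ?S" by auto
    define p where "p = Max {x\<in>?S. x < y}"
    note I = SS_insert[OF S yat False, folded p_def]
    have ay: "a \<le> y" "a \<le> p" using yat I(3) S unfolding spart_def by auto
    have pvyp: "pv P y = pv P p"
    proof -
      have "{z\<in>P. z \<le> y} = {z\<in>P. z \<le> p}"
      proof (intro set_eqI iffI)
        fix z assume "z \<in> {z\<in>P. z \<le> y}"
        then have "z \<in> P" "z \<le> y" by auto
        moreover have "z \<noteq> y" using False \<open>z \<in> P\<close> by auto
        ultimately show "z \<in> {z\<in>P. z \<le> p}" using I(5) by auto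
      qed (use I(4) in auto)
      then show ?thesis unfolding pv_def by simp
    qed
    have L1: "LS f g t (insert y ?S) = LS f g t ?S + (f y - f p) * (g (nx ?S y) - g y)"
      unfolding LS_def I(1) by (simp add: algebra_simps)
    have L2: "SS (\<lambda>x x'. (f x - f (pv P x)) * (g x' - g x)) t (insert y ?S) =
       SS (\<lambda>x x'. (f x - f (pv P x)) * (g x' - g x)) t ?S + (f y - f p) * (g (nx ?S y) - g y)"
      unfolding I(1) pvyp by (simp add: algebra_simps)
    show ?thesis unfolding eqS L1 L2 IH by simp
  qed
qed

lemma LS_refine:
  assumes P: "spart a t P" and S: "spart a t S" and PS: "P \<subseteq> S"
  shows "LS f g t S = LS f g t P + SS (\<lambda>x x'. (f x - f (pv P x)) * (g x' - g x)) t S"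
proof -
  have "P \<union> S = S" using PS by auto
  then show ?thesis using LS_refine_aux[OF P, of S f g] S unfolding spart_def by auto
qed

lemma SS_two:
  assumes "a \<le> t"
  shows "SS F t {a, t} = (if a = t then 0 else F a t)"
proof (cases "a = t")
  case True then show ?thesis by (simp add: SS_def)
next
  case False
  then have "{a, t} - {t} = {a}" by auto
  moreover have "nx {a, t} a = t" by (rule nx_eqI) (use False assms in auto)
  ultimately show ?thesis using False by (simp add: SS_def)
qed

lemma SS_telescope:
  assumes S: "spart a t S"
  shows "SS (\<lambda>x x'. G x' - G x) t S = G t - G a"
proof -
  have at: "a \<le> t" using spart_le[OF S] .
  have P: "spart a t {a, t}" using at unfolding spart_def by auto
  have sub: "{a, t} \<subseteq> S" using S unfolding spart_def by auto
  have "LS (\<lambda>_. 1) G t S = LS (\<lambda>_. 1) G t {a, t}"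
    using LS_refine[OF P S sub, of "\<lambda>_. 1" G] by (simp add: SS_def)
  then show ?thesis unfolding LS_def using SS_two[OF at] by (auto split: if_splits)
qed

lemma SS_abs_le:
  assumes "\<And>x. x \<in> S - {t} \<Longrightarrow> \<bar>F x (nx S x)\<bar> \<le> G x (nx S x)"
  shows "\<bar>SS F t S\<bar> \<le> SS G t S"
  unfolding SS_def
proof -
  have "\<bar>\<Sum>x\<in>S - {t}. F x (nx S x)\<bar> \<le> (\<Sum>x\<in>S - {t}. \<bar>F x (nx S x)\<bar>)" by (rule sum_abs)
  also have "\<dots> \<le> (\<Sum>x\<in>S - {t}. G x (nx S x))" by (rule sum_mono) (rule assms)
  finally show "\<bar>\<Sum>x\<in>S - {t}. F x (nx S x)\<bar> \<le> (\<Sum>x\<in>S - {t}. G x (nx S x))" .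
qed

lemma SS_mono:
  assumes "\<And>x. x \<in> S - {t} \<Longrightarrow> F x (nx S x) \<le> G x (nx S x)"
  shows "SS F t S \<le> SS G t S"
  unfolding SS_def by (rule sum_mono) (rule assms)

lemma LS_refine_bound:
  assumes P: "spart a t P" and S: "spart a t S" and PS: "P \<subseteq> S"
    and fP: "sfine P t \<delta>"
    and uc: "\<And>x y. x \<in> {a..t} \<Longrightarrow> y \<in> {a..t} \<Longrightarrow> \<bar>x - y\<bar> < \<delta> \<Longrightarrow> \<bar>f x - f y\<bar> \<le> \<eta>"
  shows "\<bar>LS f g t S - LS f g t P\<bar> \<le> \<eta> * SS (\<lambda>x x'. \<bar>g x' - g x\<bar>) t S"
proof -
  have "\<bar>SS (\<lambda>x x'. (f x - f (pv P x)) * (g x' - g x)) t S\<bar> \<le> SS (\<lambda>x x'. \<eta> * \<bar>g x' - g x\<bar>) t S"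
  proof (rule SS_abs_le)
    fix x assume x: "x \<in> S - {t}"
    have xr: "x < t" "a \<le> x" using spart_lt[OF S x] by auto
    define q where "q = pv P x"
    have q: "q \<in> P" "q \<le> x" "\<forall>y\<in>P. y \<le> x \<longrightarrow> y \<le> q" using pv_props[OF P xr(2)] unfolding q_def by auto
    have qt: "q \<in> P - {t}" using q xr by auto
    have nq: "nx P q \<in> P" "q < nx P q" using nx_props[OF P qt] by auto
    have "x < nx P q"
    proof (rule ccontr)
      assume "\<not> x < nx P q"
      then have "nx P q \<le> q" using q(3) nq(1) by auto
      then show False using nq(2) by simp
    qed
    moreover have "nx P q - q < \<delta>" using fP qt unfolding sfine_def by blast
    ultimately have "\<bar>x - q\<bar> < \<delta>" using q(2) by auto
    moreover have "q \<in> {a..t}" using q(1) P unfolding spart_def by auto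
    ultimately have "\<bar>f x - f q\<bar> \<le> \<eta>" using uc[of x q] xr by auto
    then show "\<bar>(f x - f (pv P x)) * (g (nx S x) - g x)\<bar> \<le> \<eta> * \<bar>g (nx S x) - g x\<bar>"
      unfolding q_def[symmetric] abs_mult by (simp add: mult_right_mono)
  qed
  also have "\<dots> = \<eta> * SS (\<lambda>x x'. \<bar>g x' - g x\<bar>) t S"
    unfolding SS_def by (simp add: sum_distrib_left)
  finally show ?thesis using LS_refine[OF P S PS] by simp
qed

lemma spart_union: "spart a t P \<Longrightarrow> spart a t Q \<Longrightarrow> spart a t (P \<union> Q)"
  unfolding spart_def by auto

lemma SS_split:
  assumes P1: "spart a s P1" and P2: "spart s t P2"
  shows "spart a t (P1 \<union> P2)" and "SS F t (P1 \<union> P2) = SS F s P1 + SS F t P2"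
    and "sfine P1 s d \<Longrightarrow> sfine P2 t d \<Longrightarrow> sfine (P1 \<union> P2) t d"
proof -
  have f1: "finite P1" "a \<in> P1" "s \<in> P1" "P1 \<subseteq> {a..s}" using P1 unfolding spart_def by auto
  have f2: "finite P2" "s \<in> P2" "t \<in> P2" "P2 \<subseteq> {s..t}" using P2 unfolding spart_def by auto
  have st: "s \<le> t" "a \<le> s" using f1 f2 by auto
  show U: "spart a t (P1 \<union> P2)" using f1 f2 st unfolding spart_def by auto
  have fu: "finite (P1 \<union> P2)" using f1 f2 by simp
  have eq: "P1 \<union> P2 - {t} = (P1 - {s}) \<union> (P2 - {t})"
  proof -
    have "P1 - {s} \<subseteq> {a..<s}" using f1 by auto
    then show ?thesis using f1 f2 st by (cases "s = t") auto
  qed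
  have disj: "(P1 - {s}) \<inter> (P2 - {t}) = {}" using f1 f2 by force
  have n1: "nx (P1 \<union> P2) x = nx P1 x" if x: "x \<in> P1 - {s}" for x
  proof -
    have m: "nx P1 x \<in> P1 \<and> x < nx P1 x \<and> (\<forall>z\<in>P1. x < z \<longrightarrow> nx P1 x \<le> z)" using nx_props[OF P1 x] .
    have "nx P1 x \<le> s" using m f1 x by auto
    show ?thesis by (rule nx_eqI[OF fu]) (use m f2 \<open>nx P1 x \<le> s\<close> in force)+
  qed
  have n2: "nx (P1 \<union> P2) x = nx P2 x" if x: "x \<in> P2 - {t}" for x
  proof -
    have m: "nx P2 x \<in> P2 \<and> x < nx P2 x \<and> (\<forall>z\<in>P2. x < z \<longrightarrow> nx P2 x \<le> z)" using nx_props[OF P2 x] .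
    have "s \<le> x" using x f2 by auto
    show ?thesis by (rule nx_eqI[OF fu]) (use m f1 \<open>s \<le> x\<close> in force)+
  qed
  show "SS F t (P1 \<union> P2) = SS F s P1 + SS F t P2"
    unfolding SS_def eq using f1 f2 disj n1 n2 by (simp add: sum.union_disjoint)
  show "sfine (P1 \<union> P2) t d" if h1: "sfine P1 s d" and h2: "sfine P2 t d"
    unfolding sfine_def eq
  proof
    fix x assume "x \<in> (P1 - {s}) \<union> (P2 - {t})"
    then show "nx (P1 \<union> P2) x - x < d"
    proof
      assume x: "x \<in> P1 - {s}"
      then show ?thesis using n1[OF x] h1 unfolding sfine_def by auto
    next
      assume x: "x \<in> P2 - {t}"
      then show ?thesis using n2[OF x] h2 unfolding sfine_def by auto
    qed
  qed
qed

lemma list_to_set: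
  assumes xs: "is_partition a t xs"
  shows "spart a t (set xs)"
    and "mesh_below xs \<delta> \<Longrightarrow> sfine (set xs) t \<delta>"
    and "SS F t (set xs) = (\<Sum>j<length xs - 1. F (xs ! j) (xs ! Suc j))"
proof -
  show sp: "spart a t (set xs)" unfolding spart_def using part_set[OF xs] xs
    unfolding is_partition_def by (auto simp: hd_in_set last_in_set)
  have nxj: "nx (set xs) (xs ! j) = xs ! Suc j" if j: "j < length xs - 1" for j
  proof (rule nx_eqI)
    show "xs ! Suc j \<in> set xs" using j by auto
    show "xs ! j < xs ! Suc j" using part_nth_less[OF xs, of j "Suc j"] j by auto
    fix z assume "z \<in> set xs" "xs ! j < z"
    then obtain i where i: "i < length xs" "z = xs ! i" by (auto simp: in_set_conv_nth)
    have "\<not> i \<le> j"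
    proof
      assume "i \<le> j"
      moreover have "j < length xs" using j by linarith
      ultimately have "xs ! i \<le> xs ! j" using part_nth_less[OF xs, of i j] by (cases "i = j") auto
      then show False using \<open>xs ! j < z\<close> i by simp
    qed
    then have "Suc j \<le> i" by simp
    then show "xs ! Suc j \<le> z" using part_nth_less[OF xs, of "Suc j" i] i by (cases "Suc j = i") auto
  qed simp
  have img: "set xs - {t} = (\<lambda>j. xs ! j) ` {..<length xs - 1}"
  proof (intro set_eqI iffI)
    fix z assume "z \<in> set xs - {t}"
    then obtain i where i: "i < length xs" "z = xs ! i" "xs ! i \<noteq> t" by (auto simp: in_set_conv_nth)
    then have "i \<noteq> length xs - 1" using part_last[OF xs] by auto
    then show "z \<in> (\<lambda>j. xs ! j) ` {..<length xs - 1}" using i by auto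
  next
    fix z assume "z \<in> (\<lambda>j. xs ! j) ` {..<length xs - 1}"
    then obtain j where j: "j < length xs - 1" "z = xs ! j" by auto
    then have "xs ! j < xs ! (length xs - 1)" using part_nth_less[OF xs, of j "length xs - 1"] by auto
    then show "z \<in> set xs - {t}" using j part_last[OF xs] by auto
  qed
  have inj: "inj_on (\<lambda>j. xs ! j) {..<length xs - 1}"
  proof (rule inj_onI)
    fix i j assume ij: "i \<in> {..<length xs - 1}" "j \<in> {..<length xs - 1}" "xs ! i = xs ! j"
    show "i = j"
    proof (rule ccontr)
      assume "i \<noteq> j"
      then consider "i < j" | "j < i" by linarith
      moreover have "i < length xs" "j < length xs" using ij by auto
      ultimately show False using part_nth_less[OF xs, of i j] part_nth_less[OF xs, of j i] ij(3) by cases auto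
    qed
  qed
  show "SS F t (set xs) = (\<Sum>j<length xs - 1. F (xs ! j) (xs ! Suc j))"
    unfolding SS_def img sum.reindex[OF inj] by (rule sum.cong) (auto simp: nxj simp del: One_nat_def)
  assume "mesh_below xs \<delta>"
  then show "sfine (set xs) t \<delta>" unfolding sfine_def img mesh_below_def using nxj by auto
qed

lemma sfine_exists:
  assumes "a \<le> t" "\<delta> > 0"
  shows "\<exists>S. spart a t S \<and> sfine S t \<delta>"
  using uniform_list_partition[OF assms] list_to_set by blast

lemma sfine_mono: "sfine S t \<delta> \<Longrightarrow> \<delta> \<le> \<delta>' \<Longrightarrow> sfine S t \<delta>'"
  unfolding sfine_def by force



lemma SS_abs_nonneg: "0 \<le> SS (\<lambda>x x'. \<bar>g x' - g x\<bar>) t S"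
  unfolding SS_def by (rule sum_nonneg) auto

lemma uc_real:
  fixes f :: "real \<Rightarrow> real" and a t \<eta> :: real
  assumes "continuous_on {a..t} f" "\<eta> > 0"
  shows "\<exists>\<delta>>0. \<forall>x\<in>{a..t}. \<forall>y\<in>{a..t}. \<bar>x - y\<bar> < \<delta> \<longrightarrow> \<bar>f x - f y\<bar> \<le> (\<eta>::real)"
proof -
  have "uniformly_continuous_on {a..t} f"
    using compact_uniformly_continuous[OF assms(1) compact_Icc] .
  then obtain \<delta> where "\<delta> > 0" "\<forall>x\<in>{a..t}. \<forall>x'\<in>{a..t}. dist x' x < \<delta> \<longrightarrow> dist (f x') (f x) < \<eta>"
    unfolding uniformly_continuous_on_def using assms(2) by metis
  then show ?thesis unfolding dist_real_def by (metis abs_minus_commute less_imp_le)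
qed

lemma RS_exists:
  fixes f g :: "real \<Rightarrow> real"
  assumes at: "a \<le> t" and fc: "continuous_on {a..t} f"
    and V: "\<And>S. spart a t S \<Longrightarrow> SS (\<lambda>x x'. \<bar>g x' - g x\<bar>) t S \<le> V"
  shows "\<exists>I. has_RS_integral f g a t I \<and>
     (\<forall>\<epsilon>>0. \<exists>\<delta>>0. \<forall>S. spart a t S \<and> sfine S t \<delta> \<longrightarrow> \<bar>LS f g t S - I\<bar> \<le> \<epsilon>)"
proof -
  have V0: "0 \<le> V"
  proof -
    have "spart a t {a, t}" using at unfolding spart_def by auto
    then show ?thesis using V SS_abs_nonneg[of g t "{a, t}"] by (meson order_trans)
  qed
  have K: "\<exists>\<delta>>0. \<forall>P Q. spart a t P \<and> sfine P t \<delta> \<and> spart a t Q \<and> sfine Q t \<delta> \<longrightarrow>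
             \<bar>LS f g t P - LS f g t Q\<bar> \<le> \<epsilon>" if e: "\<epsilon> > 0" for \<epsilon>
  proof -
    define \<eta> where "\<eta> = \<epsilon> / (2 * (V + 1))"
    have \<eta>: "\<eta> > 0" using e V0 by (simp add: \<eta>_def)
    obtain \<delta> where d: "\<delta> > 0" and uc: "\<forall>x\<in>{a..t}. \<forall>y\<in>{a..t}. \<bar>x - y\<bar> < \<delta> \<longrightarrow> \<bar>f x - f y\<bar> \<le> \<eta>"
      using uc_real[OF fc \<eta>] by blast
    have "\<bar>LS f g t P - LS f g t Q\<bar> \<le> \<epsilon>"
      if P: "spart a t P" "sfine P t \<delta>" and Q: "spart a t Q" "sfine Q t \<delta>" for P Q
    proof -
      have U: "spart a t (P \<union> Q)" using spart_union[OF P(1) Q(1)] .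
      have "\<bar>LS f g t (P \<union> Q) - LS f g t P\<bar> \<le> \<eta> * SS (\<lambda>x x'. \<bar>g x' - g x\<bar>) t (P \<union> Q)"
        by (rule LS_refine_bound[OF P(1) U _ P(2)]) (use uc in auto)
      also have "\<dots> \<le> \<eta> * V" using V[OF U] \<eta> by (simp add: mult_left_mono)
      finally have 1: "\<bar>LS f g t (P \<union> Q) - LS f g t P\<bar> \<le> \<eta> * V" .
      have "\<bar>LS f g t (P \<union> Q) - LS f g t Q\<bar> \<le> \<eta> * SS (\<lambda>x x'. \<bar>g x' - g x\<bar>) t (P \<union> Q)"
        by (rule LS_refine_bound[OF Q(1) U _ Q(2)]) (use uc in auto)
      also have "\<dots> \<le> \<eta> * V" using V[OF U] \<eta> by (simp add: mult_left_mono)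
      finally have 2: "\<bar>LS f g t (P \<union> Q) - LS f g t Q\<bar> \<le> \<eta> * V" .
      have "2 * (\<eta> * V) \<le> \<epsilon>"
        using e V0 by (simp add: \<eta>_def field_simps)
      then show ?thesis using 1 2 by linarith
    qed
    then show ?thesis using d by blast
  qed
  have "\<forall>n. \<exists>S. spart a t S \<and> sfine S t (inverse (real (Suc n)))"
    using sfine_exists[OF at] by simp
  then obtain Sq where Sq: "\<And>n. spart a t (Sq n) \<and> sfine (Sq n) t (inverse (real (Suc n)))"
    by metis
  define c where "c n = LS f g t (Sq n)" for n
  have fineM: "\<exists>M. \<forall>n\<ge>M. sfine (Sq n) t \<delta>" if dpos: "\<delta> > 0" for \<delta>
  proof -
    obtain M where M: "M > 0" "inverse (real M) < \<delta>" using ex_inverse_of_nat_less[OF dpos] by blast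
    have "sfine (Sq n) t \<delta>" if "n \<ge> M" for n
    proof -
      have "inverse (real (Suc n)) \<le> inverse (real M)"
        using that M(1) by (simp add: le_imp_inverse_le)
      then have "inverse (real (Suc n)) \<le> \<delta>" using M(2) by linarith
      then show ?thesis using Sq[of n] sfine_mono[of "Sq n" t "inverse (real (Suc n))" \<delta>] by simp
    qed
    then show ?thesis by blast
  qed
  have "Cauchy c"
  proof (rule CauchyI)
    fix e :: real assume e: "0 < e"
    obtain \<delta> where d: "\<delta> > 0" and Kd: "\<forall>P Q. spart a t P \<and> sfine P t \<delta> \<and> spart a t Q \<and> sfine Q t \<delta> \<longrightarrow>
             \<bar>LS f g t P - LS f g t Q\<bar> \<le> e / 2" using K[of "e/2"] e by auto
    obtain M where M: "\<forall>n\<ge>M. sfine (Sq n) t \<delta>" using fineM[OF d] by blast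
    have "\<forall>m\<ge>M. \<forall>n\<ge>M. norm (c m - c n) < e"
    proof (intro allI impI)
      fix m n assume mn: "m \<ge> M" "n \<ge> M"
      have "\<bar>LS f g t (Sq m) - LS f g t (Sq n)\<bar> \<le> e / 2"
        using Kd Sq[of m] Sq[of n] M mn by blast
      then show "norm (c m - c n) < e" using e by (simp add: c_def)
    qed
    then show "\<exists>M. \<forall>m\<ge>M. \<forall>n\<ge>M. norm (c m - c n) < e" by blast
  qed
  then obtain I where I: "c \<longlonglongrightarrow> I" using Cauchy_convergent_iff convergent_def by blast
  have char: "\<exists>\<delta>>0. \<forall>S. spart a t S \<and> sfine S t \<delta> \<longrightarrow> \<bar>LS f g t S - I\<bar> \<le> \<epsilon>" if e: "\<epsilon> > 0" for \<epsilon>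
  proof -
    obtain \<delta> where d: "\<delta> > 0" and Kd: "\<forall>P Q. spart a t P \<and> sfine P t \<delta> \<and> spart a t Q \<and> sfine Q t \<delta> \<longrightarrow>
             \<bar>LS f g t P - LS f g t Q\<bar> \<le> \<epsilon>" using K[OF e] by auto
    obtain M where M: "\<forall>n\<ge>M. sfine (Sq n) t \<delta>" using fineM[OF d] by blast
    have "\<bar>LS f g t S - I\<bar> \<le> \<epsilon>" if S: "spart a t S" "sfine S t \<delta>" for S
    proof (rule LIMSEQ_le_const2)
      show "(\<lambda>n. \<bar>LS f g t S - c n\<bar>) \<longlonglongrightarrow> \<bar>LS f g t S - I\<bar>"
        by (intro tendsto_intros I)
      show "\<exists>N. \<forall>n\<ge>N. \<bar>LS f g t S - c n\<bar> \<le> \<epsilon>"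
      proof (intro exI[of _ M] allI impI)
        fix n assume "n \<ge> M"
        then show "\<bar>LS f g t S - c n\<bar> \<le> \<epsilon>" unfolding c_def using Kd S Sq[of n] M by blast
      qed
    qed
    then show ?thesis using d by blast
  qed
  have "has_RS_integral f g a t I"
    unfolding has_RS_integral_def
  proof (intro allI impI)
    fix \<epsilon> :: real assume e: "\<epsilon> > 0"
    obtain \<delta>1 where d1: "\<delta>1 > 0" and c1: "\<forall>S. spart a t S \<and> sfine S t \<delta>1 \<longrightarrow> \<bar>LS f g t S - I\<bar> \<le> \<epsilon> / 2"
      using char[of "\<epsilon>/2"] e by auto
    define \<eta> where "\<eta> = \<epsilon> / (4 * (V + 1))"
    have \<eta>: "\<eta> > 0" using e V0 by (simp add: \<eta>_def)
    obtain \<delta>2 where d2: "\<delta>2 > 0" and uc: "\<forall>x\<in>{a..t}. \<forall>y\<in>{a..t}. \<bar>x - y\<bar> < \<delta>2 \<longrightarrow> \<bar>f x - f y\<bar> \<le> \<eta>"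
      using uc_real[OF fc \<eta>] by blast
    have "\<bar>RS_sum f g xs ts - I\<bar> < \<epsilon>"
      if xs: "is_partition a t xs" "is_tagging xs ts" "mesh_below xs (min \<delta>1 \<delta>2)" for xs ts
    proof -
      have sp: "spart a t (set xs)" using list_to_set(1)[OF xs(1)] .
      have sf: "sfine (set xs) t \<delta>1"
        using list_to_set(2)[OF xs(1) xs(3)] sfine_mono by (metis min.cobounded1)
      have 1: "\<bar>LS f g t (set xs) - I\<bar> \<le> \<epsilon> / 2" using c1 sp sf by blast
      have lts: "length ts = length xs - 1" using xs(2) unfolding is_tagging_def by linarith
      have LSe: "LS f g t (set xs) = (\<Sum>j<length ts. f (xs ! j) * (g (xs ! Suc j) - g (xs ! j)))"
        unfolding LS_def list_to_set(3)[OF xs(1)] lts ..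
      have Ve: "SS (\<lambda>x x'. \<bar>g x' - g x\<bar>) t (set xs) = (\<Sum>j<length ts. \<bar>g (xs ! Suc j) - g (xs ! j)\<bar>)"
        unfolding list_to_set(3)[OF xs(1)] lts ..
      have "\<bar>RS_sum f g xs ts - LS f g t (set xs)\<bar> =
            \<bar>\<Sum>j<length ts. (f (ts ! j) - f (xs ! j)) * (g (xs ! Suc j) - g (xs ! j))\<bar>"
        unfolding RS_sum_def LSe by (simp add: sum_subtractf[symmetric] algebra_simps)
      also have "\<dots> \<le> (\<Sum>j<length ts. \<bar>(f (ts ! j) - f (xs ! j)) * (g (xs ! Suc j) - g (xs ! j))\<bar>)"
        by (rule sum_abs)
      also have "\<dots> \<le> (\<Sum>j<length ts. \<eta> * \<bar>g (xs ! Suc j) - g (xs ! j)\<bar>)"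
      proof (rule sum_mono)
        fix j assume j: "j \<in> {..<length ts}"
        have jl: "Suc j < length xs" using j lts by auto
        have r1: "xs ! j \<le> ts ! j" "ts ! j \<le> xs ! Suc j" using xs(2) j unfolding is_tagging_def by auto
        have r2: "a \<le> xs ! j" "xs ! Suc j \<le> t" using part_nth_range[OF xs(1)] jl by auto
        have "xs ! Suc j - xs ! j < min \<delta>1 \<delta>2" using xs(3) jl unfolding mesh_below_def by auto
        then have "\<bar>ts ! j - xs ! j\<bar> < \<delta>2" using r1 by auto
        then have "\<bar>f (ts ! j) - f (xs ! j)\<bar> \<le> \<eta>" using uc r1 r2 by auto
        then show "\<bar>(f (ts ! j) - f (xs ! j)) * (g (xs ! Suc j) - g (xs ! j))\<bar> \<le> \<eta> * \<bar>g (xs ! Suc j) - g (xs ! j)\<bar>"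
          unfolding abs_mult by (simp add: mult_right_mono)
      qed
      also have "\<dots> = \<eta> * SS (\<lambda>x x'. \<bar>g x' - g x\<bar>) t (set xs)"
        unfolding Ve by (simp add: sum_distrib_left)
      also have "\<dots> \<le> \<eta> * V" using V[OF sp] \<eta> by (simp add: mult_left_mono)
      also have "\<dots> < \<epsilon> / 2" using e V0 by (simp add: \<eta>_def field_simps) (intro add_pos_nonneg mult_nonneg_nonneg, auto)
      finally show ?thesis using 1 by linarith
    qed
    then show "\<exists>\<delta>>0. \<forall>xs ts. is_partition a t xs \<and> is_tagging xs ts \<and> mesh_below xs \<delta> \<longrightarrow>
        \<bar>RS_sum f g xs ts - I\<bar> < \<epsilon>"
      using d1 d2 by (intro exI[of _ "min \<delta>1 \<delta>2"]) auto
  qed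
  then show ?thesis using char by blast
qed

lemma RS_unique:
  assumes at: "a \<le> t" and I: "has_RS_integral f g a t I" and J: "has_RS_integral f g a t J"
  shows "I = J"
proof (rule ccontr)
  assume ne: "I \<noteq> J"
  define e where "e = \<bar>I - J\<bar> / 2"
  have e: "e > 0" using ne by (simp add: e_def)
  obtain d1 where d1: "d1 > 0" "\<forall>xs ts. is_partition a t xs \<and> is_tagging xs ts \<and> mesh_below xs d1 \<longrightarrow>
        \<bar>RS_sum f g xs ts - I\<bar> < e" using I e unfolding has_RS_integral_def by blast
  obtain d2 where d2: "d2 > 0" "\<forall>xs ts. is_partition a t xs \<and> is_tagging xs ts \<and> mesh_below xs d2 \<longrightarrow>
        \<bar>RS_sum f g xs ts - J\<bar> < e" using J e unfolding has_RS_integral_def by blast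
  obtain xs ts where xs: "is_partition a t xs" "is_tagging xs ts" "mesh_below xs (min d1 d2)"
    using uniform_list_partition[OF at, of "min d1 d2"] d1 d2 by auto
  have "mesh_below xs d1" "mesh_below xs d2" using xs(3) unfolding mesh_below_def by force+
  then have "\<bar>RS_sum f g xs ts - I\<bar> < e" "\<bar>RS_sum f g xs ts - J\<bar> < e" using d1 d2 xs by auto
  moreover have "\<bar>I - J\<bar> \<le> \<bar>I - RS_sum f g xs ts\<bar> + \<bar>RS_sum f g xs ts - J\<bar>"
    using abs_triangle_ineq[of "I - RS_sum f g xs ts" "RS_sum f g xs ts - J"] by simp
  moreover have "\<bar>I - RS_sum f g xs ts\<bar> = \<bar>RS_sum f g xs ts - I\<bar>" by (rule abs_minus_commute)
  ultimately show False unfolding e_def by (simp add: abs_if split: if_splits)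
qed

lemma RS_char:
  fixes f g :: "real \<Rightarrow> real"
  assumes at: "a \<le> t" and fc: "continuous_on {a..t} f"
    and V: "\<And>S. spart a t S \<Longrightarrow> SS (\<lambda>x x'. \<bar>g x' - g x\<bar>) t S \<le> V"
  shows "\<forall>\<epsilon>>0. \<exists>\<delta>>0. \<forall>S. spart a t S \<and> sfine S t \<delta> \<longrightarrow> \<bar>LS f g t S - RS_integral f g a t\<bar> \<le> \<epsilon>"
proof -
  obtain I where I: "has_RS_integral f g a t I"
    "\<forall>\<epsilon>>0. \<exists>\<delta>>0. \<forall>S. spart a t S \<and> sfine S t \<delta> \<longrightarrow> \<bar>LS f g t S - I\<bar> \<le> \<epsilon>"
    using RS_exists[OF at fc V] by blast
  have "RS_integral f g a t = I" unfolding RS_integral_def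
    by (rule the_equality) (use I(1) RS_unique[OF at] in auto)
  then show ?thesis using I(2) by simp
qed



lemma RS_est:
  fixes f g :: "real \<Rightarrow> real"
  assumes fc: "continuous_on {a..b} f"
    and V: "\<And>s t S. a \<le> s \<Longrightarrow> s \<le> t \<Longrightarrow> t \<le> b \<Longrightarrow> spart s t S \<Longrightarrow> SS (\<lambda>x x'. \<bar>g x' - g x\<bar>) t S \<le> V"
    and st: "a \<le> s" "s \<le> t" "t \<le> b" "t - s < \<delta>"
    and uc: "\<forall>x\<in>{a..b}. \<forall>y\<in>{a..b}. \<bar>x - y\<bar> < \<delta> \<longrightarrow> \<bar>f x - f y\<bar> \<le> \<eta>"
    and \<eta>: "\<eta> \<ge> 0"
  shows "\<bar>RS_integral f g a t - RS_integral f g a s\<bar> \<le> \<bar>f s\<bar> * \<bar>g t - g s\<bar> + \<eta> * V"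
proof (rule field_le_epsilon)
  fix e :: real assume e: "e > 0"
  have fcs: "continuous_on {a..s} f" by (rule continuous_on_subset[OF fc]) (use st in auto)
  have fct: "continuous_on {a..t} f" by (rule continuous_on_subset[OF fc]) (use st in auto)
  have Vs: "\<And>S. spart a s S \<Longrightarrow> SS (\<lambda>x x'. \<bar>g x' - g x\<bar>) s S \<le> V"
    using V[of a s] st by auto
  have Vt: "\<And>S. spart a t S \<Longrightarrow> SS (\<lambda>x x'. \<bar>g x' - g x\<bar>) t S \<le> V"
    using V[of a t] st by auto
  have "\<exists>\<delta>>0. \<forall>S. spart a s S \<and> sfine S s \<delta> \<longrightarrow> \<bar>LS f g s S - RS_integral f g a s\<bar> \<le> e / 2"
    using RS_char[OF st(1) fcs Vs] half_gt_zero[OF e] by blast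
  then obtain d1 where d1: "d1 > 0" "\<forall>S. spart a s S \<and> sfine S s d1 \<longrightarrow> \<bar>LS f g s S - RS_integral f g a s\<bar> \<le> e / 2"
    by blast
  have at: "a \<le> t" using st by simp
  have "\<exists>\<delta>>0. \<forall>S. spart a t S \<and> sfine S t \<delta> \<longrightarrow> \<bar>LS f g t S - RS_integral f g a t\<bar> \<le> e / 2"
    using RS_char[OF at fct Vt] half_gt_zero[OF e] by blast
  then obtain d2 where d2: "d2 > 0" "\<forall>S. spart a t S \<and> sfine S t d2 \<longrightarrow> \<bar>LS f g t S - RS_integral f g a t\<bar> \<le> e / 2"
    by blast
  define d where "d = min d1 d2"
  have d: "d > 0" using d1 d2 by (simp add: d_def)
  obtain P1 where P1: "spart a s P1" "sfine P1 s d" using sfine_exists[OF st(1) d] by blast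
  obtain P2 where P2: "spart s t P2" "sfine P2 t d" using sfine_exists[OF st(2) d] by blast
  have U: "spart a t (P1 \<union> P2)" "sfine (P1 \<union> P2) t d" using SS_split(1,3)[OF P1(1) P2(1)] P1 P2 by auto
  have LSU: "LS f g t (P1 \<union> P2) = LS f g s P1 + LS f g t P2"
    unfolding LS_def using SS_split(2)[OF P1(1) P2(1)] .
  have e1: "\<bar>LS f g s P1 - RS_integral f g a s\<bar> \<le> e / 2"
    using d1 P1 sfine_mono[OF P1(2), of d1] by (simp add: d_def)
  have e2: "\<bar>LS f g t (P1 \<union> P2) - RS_integral f g a t\<bar> \<le> e / 2"
    using d2 U sfine_mono[OF U(2), of d2] by (simp add: d_def)
  have Q: "spart s t {s, t}" using st unfolding spart_def by auto
  have QP: "{s, t} \<subseteq> P2" using P2 unfolding spart_def by auto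
  have Qf: "sfine {s, t} t \<delta>"
  proof (cases "s = t")
    case True then show ?thesis unfolding sfine_def by simp
  next
    case False
    then have "nx {s, t} s = t" by (intro nx_eqI) (use st in auto)
    then show ?thesis unfolding sfine_def using st by auto
  qed
  have "\<bar>LS f g t P2 - LS f g t {s, t}\<bar> \<le> \<eta> * SS (\<lambda>x x'. \<bar>g x' - g x\<bar>) t P2"
    by (rule LS_refine_bound[OF Q P2(1) QP Qf]) (use uc st in auto)
  also have "\<dots> \<le> \<eta> * V" using V[OF st(1-3) P2(1)] \<eta> by (simp add: mult_left_mono)
  finally have e3: "\<bar>LS f g t P2 - LS f g t {s, t}\<bar> \<le> \<eta> * V" .
  have e4: "\<bar>LS f g t {s, t}\<bar> \<le> \<bar>f s\<bar> * \<bar>g t - g s\<bar>"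
    unfolding LS_def SS_two[OF st(2)] by (simp add: abs_mult)
  show "\<bar>RS_integral f g a t - RS_integral f g a s\<bar> \<le> \<bar>f s\<bar> * \<bar>g t - g s\<bar> + \<eta> * V + e"
    using e1 e2 e3 e4 LSU by (simp add: abs_if split: if_splits)
qed

lemma RS_cont:
  fixes f g :: "real \<Rightarrow> real"
  assumes ab: "a \<le> b" and fc: "continuous_on {a..b} f" and gc: "continuous_on {a..b} g"
    and V: "\<And>s t S. a \<le> s \<Longrightarrow> s \<le> t \<Longrightarrow> t \<le> b \<Longrightarrow> spart s t S \<Longrightarrow> SS (\<lambda>x x'. \<bar>g x' - g x\<bar>) t S \<le> V"
  shows "continuous_on {a..b} (\<lambda>t. RS_integral f g a t)"
  unfolding continuous_on_iff
proof (intro ballI allI impI)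
  fix x e :: real assume x: "x \<in> {a..b}" and e: "e > 0"
  have V0: "0 \<le> V"
  proof -
    have "spart a a {a}" unfolding spart_def by auto
    then show ?thesis using V[of a a "{a}"] ab SS_abs_nonneg[of g a "{a}"] by linarith
  qed
  obtain M where M: "\<forall>y\<in>{a..b}. norm (f y) \<le> M"
    using compact_imp_bounded[OF compact_continuous_image[OF fc compact_Icc]]
    unfolding bounded_iff by blast
  have "norm (f a) \<le> M" using M ab by auto
  then have M0: "0 \<le> M" using norm_ge_zero[of "f a"] by linarith
  define \<eta> where "\<eta> = e / (2 * (V + 1))"
  have \<eta>: "\<eta> > 0" using e V0 by (simp add: \<eta>_def)
  obtain d1 where d1: "d1 > 0" "\<forall>x\<in>{a..b}. \<forall>y\<in>{a..b}. \<bar>x - y\<bar> < d1 \<longrightarrow> \<bar>f x - f y\<bar> \<le> \<eta>"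
    using uc_real[OF fc \<eta>] by blast
  have e2: "e / (2 * (M + 1)) > 0" using e M0 by simp
  obtain d2 where d2: "d2 > 0" "\<forall>x'\<in>{a..b}. dist x' x < d2 \<longrightarrow> dist (g x') (g x) < e / (2 * (M + 1))"
    using gc x e2 unfolding continuous_on_iff by blast
  have \<eta>V: "\<eta> * V < e / 2" using e V0 by (simp add: \<eta>_def field_simps)
  have Mg: "M * \<bar>g u - g v\<bar> < e / 2" if "\<bar>g u - g v\<bar> < e / (2 * (M + 1))" for u v
  proof -
    have "M * \<bar>g u - g v\<bar> \<le> M * (e / (2 * (M + 1)))" using that M0 by (intro mult_left_mono) auto
    also have "\<dots> < e / 2" using M0 e by (simp add: field_simps)
    finally show ?thesis .
  qed
  show "\<exists>d>0. \<forall>x'\<in>{a..b}. dist x' x < d \<longrightarrow> dist (RS_integral f g a x') (RS_integral f g a x) < e"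
  proof (intro exI[of _ "min d1 d2"] conjI ballI impI)
    show "min d1 d2 > 0" using d1 d2 by simp
    fix y assume y: "y \<in> {a..b}" and dy: "dist y x < min d1 d2"
    have gd: "\<bar>g y - g x\<bar> < e / (2 * (M + 1))" using d2 y dy by (auto simp: dist_real_def)
    show "dist (RS_integral f g a y) (RS_integral f g a x) < e"
    proof (cases "x \<le> y")
      case True
      have "\<bar>RS_integral f g a y - RS_integral f g a x\<bar> \<le> \<bar>f x\<bar> * \<bar>g y - g x\<bar> + \<eta> * V"
        by (rule RS_est[OF fc V _ True _ _ d1(2)]) (use x y dy \<eta> in \<open>auto simp: dist_real_def\<close>)
      also have "\<bar>f x\<bar> * \<bar>g y - g x\<bar> \<le> M * \<bar>g y - g x\<bar>" using M x by (simp add: mult_right_mono)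
      finally show ?thesis using Mg[OF gd] \<eta>V by (simp add: dist_real_def)
    next
      case False
      have gd': "\<bar>g x - g y\<bar> < e / (2 * (M + 1))" using gd by (simp add: abs_minus_commute)
      have "\<bar>RS_integral f g a x - RS_integral f g a y\<bar> \<le> \<bar>f y\<bar> * \<bar>g x - g y\<bar> + \<eta> * V"
        by (rule RS_est[OF fc V _ _ _ _ d1(2)]) (use x y dy \<eta> False in \<open>auto simp: dist_real_def\<close>)
      also have "\<bar>f y\<bar> * \<bar>g x - g y\<bar> \<le> M * \<bar>g x - g y\<bar>" using M y by (simp add: mult_right_mono)
      finally show ?thesis using Mg[OF gd'] \<eta>V by (simp add: dist_real_def abs_minus_commute)
    qed
  qed
qed



lemma power_step_ineq:
  fixes u v :: real
  assumes "0 \<le> u" "u \<le> v"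
  shows "(v - u) * (u ^ k / fact k) \<le> (v ^ Suc k - u ^ Suc k) / fact (Suc k)"
proof -
  have "v ^ Suc k - u ^ Suc k = (v - u) * (\<Sum>i<Suc k. u ^ (Suc k - Suc i) * v ^ i)"
    by (rule power_diff_sumr2)
  moreover have "(\<Sum>i<Suc k. u ^ (Suc k - Suc i) * v ^ i) \<ge> (\<Sum>i<Suc k. u ^ k)"
  proof (rule sum_mono)
    fix i assume i: "i \<in> {..<Suc k}"
    have "u ^ k = u ^ (Suc k - Suc i) * u ^ i" using i by (simp add: power_add[symmetric])
    also have "\<dots> \<le> u ^ (Suc k - Suc i) * v ^ i"
      using assms by (intro mult_left_mono power_mono) auto
    finally show "u ^ k \<le> u ^ (Suc k - Suc i) * v ^ i" .
  qed
  ultimately have H: "v ^ Suc k - u ^ Suc k \<ge> (v - u) * (real (Suc k) * u ^ k)"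
    using assms by (simp add: mult_left_mono)
  have H2: "((v - u) * (real (Suc k) * u ^ k)) / fact (Suc k) \<le> (v ^ Suc k - u ^ Suc k) / fact (Suc k)"
    by (rule divide_right_mono[OF H]) simp
  moreover have "(v - u) * (u ^ k / fact k) = ((v - u) * (real (Suc k) * u ^ k)) / fact (Suc k)"
    by (simp add: fact_Suc del: of_nat_Suc)
  then show ?thesis using H2 by linarith
qed

lemma L2_set_sum_le:
  assumes "finite X"
  shows "L2_set (\<lambda>e. \<Sum>x\<in>X. h x e) E \<le> (\<Sum>x\<in>X. L2_set (h x) E)"
  using assms
proof (induction X rule: finite_induct)
  case empty then show ?case by (simp add: L2_set_0')
next
  case (insert y X)
  have "L2_set (\<lambda>e. \<Sum>x\<in>insert y X. h x e) E = L2_set (\<lambda>e. h y e + (\<Sum>x\<in>X. h x e)) E"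
    using insert by simp
  also have "\<dots> \<le> L2_set (h y) E + L2_set (\<lambda>e. \<Sum>x\<in>X. h x e) E"
    by (rule L2_set_triangle_ineq)
  also have "\<dots> \<le> L2_set (h y) E + (\<Sum>x\<in>X. L2_set (h x) E)" using insert by simp
  finally show ?case using insert by simp
qed

lemma L2_set_product:
  "L2_set (\<lambda>(i, w). u i * v w) (A \<times> B) = L2_set u A * L2_set v B"
proof -
  have "(\<Sum>(i, w)\<in>A \<times> B. (u i * v w)\<^sup>2) = (\<Sum>i\<in>A. (u i)\<^sup>2) * (\<Sum>w\<in>B. (v w)\<^sup>2)"
    by (simp add: sum_product sum.cartesian_product power_mult_distrib case_prod_beta)
  then show ?thesis unfolding L2_set_def by (simp add: real_sqrt_mult case_prod_beta)
qed

lemma norm_L2_Basis: "norm (v::'a::euclidean_space) = L2_set (\<lambda>i. v \<bullet> i) Basis"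
  unfolding norm_eq_sqrt_inner L2_set_def
  by (subst euclidean_inner) (simp add: power2_eq_square)

lemma L2_set_abs: "L2_set (\<lambda>e. \<bar>f e\<bar>) E = L2_set f E"
  unfolding L2_set_def by simp

lemma L2_set_small:
  assumes "\<And>e. e \<in> E \<Longrightarrow> \<bar>f e\<bar> \<le> \<epsilon>"
  shows "L2_set f E \<le> sqrt (real (card E)) * \<epsilon>"
proof -
  have "L2_set f E = L2_set (\<lambda>e. \<bar>f e\<bar>) E" by (simp add: L2_set_abs)
  also have "\<dots> \<le> L2_set (\<lambda>e. \<epsilon>) E" by (rule L2_set_mono) (use assms in auto)
  also have "\<dots> \<le> sqrt (real (card E)) * \<epsilon>"
  proof (cases "E = {}")
    case True then show ?thesis by simp
  next
    case False
    then obtain e where "e \<in> E" by blast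
    then have "\<epsilon> \<ge> 0" using assms[of e] by linarith
    then show ?thesis by (simp add: L2_set_constant)
  qed
  finally show ?thesis .
qed

lemma finite_common_delta:
  assumes "finite E" "\<And>e. e \<in> E \<Longrightarrow> \<exists>\<delta>>0. Q e \<delta>"
    and mono: "\<And>e \<delta> \<delta>'. Q e \<delta> \<Longrightarrow> 0 < \<delta>' \<Longrightarrow> \<delta>' \<le> \<delta> \<Longrightarrow> Q e \<delta>'"
  shows "\<exists>\<delta>>0. \<forall>e\<in>E. Q e (\<delta>::real)"
  using assms(1,2)
proof (induction E rule: finite_induct)
  case empty then show ?case by (intro exI[of _ 1]) auto
next
  case (insert y E)
  obtain d1 where d1: "d1 > 0" "\<forall>e\<in>E. Q e d1" using insert by auto
  obtain d2 where d2: "d2 > 0" "Q y d2" using insert by auto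
  have "\<forall>e\<in>insert y E. Q e (min d1 d2)"
    using d1 d2 mono[of _ d1 "min d1 d2"] mono[of y d2 "min d1 d2"] by auto
  then show ?case using d1 d2 by (intro exI[of _ "min d1 d2"]) auto
qed

lemma words_Suc: "words (Suc k) = (\<lambda>(i, w). i # w) ` (Basis \<times> words k)"
  unfolding words_def by (auto simp: length_Suc_conv image_iff)

lemma words_finite: "finite (words k :: 'a::euclidean_space list set)"
  unfolding words_def using finite_lists_length_eq[OF finite_Basis] by (simp add: conj_commute)

lemma words_inj: "inj_on (\<lambda>(i, w). i # w) (Basis \<times> words k)"
  by (auto simp: inj_on_def)

lemma L2_words_Suc:
  "L2_set h (words (Suc k)) = L2_set (\<lambda>(i, w). h (i # w)) (Basis \<times> words k)"
  unfolding L2_set_def words_Suc sum.reindex[OF words_inj] by (simp add: case_prod_beta comp_def)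



context
  fixes p :: "real \<Rightarrow> 'a::euclidean_space" and a b :: real
  assumes ab: "a \<le> b" and pc: "continuous_on {a..b} p" and bv: "bounded_variation_on p a b"
begin

lemma comp_V:
  assumes "a \<le> s" "s \<le> t" "t \<le> b" "spart s t S" "i \<in> Basis"
  shows "SS (\<lambda>x x'. \<bar>p x' \<bullet> i - p x \<bullet> i\<bar>) t S \<le> path_length p a b"
proof -
  have "SS (\<lambda>x x'. \<bar>p x' \<bullet> i - p x \<bullet> i\<bar>) t S \<le> SS (\<lambda>x x'. path_length p a x' - path_length p a x) t S"
  proof (rule SS_mono)
    fix x assume x: "x \<in> S - {t}"
    have n: "nx S x \<in> S" "x < nx S x" using nx_props[OF assms(4) x] by auto
    have r: "s \<le> x" "nx S x \<le> t" using assms(4) x n unfolding spart_def by auto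
    have "\<bar>p (nx S x) \<bullet> i - p x \<bullet> i\<bar> = \<bar>(p (nx S x) - p x) \<bullet> i\<bar>" by (simp add: inner_diff_left)
    also have "\<dots> \<le> norm (p (nx S x) - p x)" by (rule Basis_le_norm[OF assms(5)])
    also have "\<dots> \<le> path_length p a (nx S x) - path_length p a x"
      using path_length_mono[OF bv, of x "nx S x"] assms r n by linarith
    finally show "\<bar>p (nx S x) \<bullet> i - p x \<bullet> i\<bar> \<le> path_length p a (nx S x) - path_length p a x" .
  qed
  also have "\<dots> = path_length p a t - path_length p a s" by (rule SS_telescope[OF assms(4)])
  also have "\<dots> \<le> path_length p a b"
    using path_length_nonneg[OF bv, of s] path_length_le[OF bv, of t b] assms by linarith
  finally show ?thesis .
qed

lemma sig_cont: "set w \<subseteq> Basis \<Longrightarrow> continuous_on {a..b} (sig_rev p a w)"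
proof (induction w)
  case Nil
  have "sig_rev p a [] = (\<lambda>_. 1)" by (rule ext) simp
  then show ?case by (simp add: continuous_on_const)
next
  case (Cons i w)
  have e: "sig_rev p a (i # w) = (\<lambda>t. RS_integral (sig_rev p a w) (\<lambda>u. p u \<bullet> i) a t)" by (rule ext) simp
  have gc: "continuous_on {a..b} (\<lambda>u. p u \<bullet> i)" by (intro continuous_intros pc)
  have IH: "continuous_on {a..b} (sig_rev p a w)" using Cons by simp
  show ?case unfolding e
    by (rule RS_cont[OF ab IH gc]) (use comp_V Cons.prems in auto)
qed

lemma sig_char:
  assumes "set w \<subseteq> Basis" "i \<in> Basis" "a \<le> t" "t \<le> b"
  shows "\<forall>\<epsilon>>0. \<exists>\<delta>>0. \<forall>S. spart a t S \<and> sfine S t \<delta> \<longrightarrow>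
           \<bar>LS (sig_rev p a w) (\<lambda>u. p u \<bullet> i) t S - sig_rev p a (i # w) t\<bar> \<le> \<epsilon>"
proof -
  have fc: "continuous_on {a..t} (sig_rev p a w)"
    by (rule continuous_on_subset[OF sig_cont[OF assms(1)]]) (use assms in auto)
  have V: "\<And>S. spart a t S \<Longrightarrow> SS (\<lambda>x x'. \<bar>p x' \<bullet> i - p x \<bullet> i\<bar>) t S \<le> path_length p a b"
    using comp_V[of a t] assms by auto
  show ?thesis using RS_char[OF assms(3) fc V] by simp
qed

lemma words_0: "words 0 = {[]}"
  unfolding words_def by auto

lemma sig_norm: "\<forall>t\<in>{a..b}. L2_set (\<lambda>w. sig_rev p a w t) (words k) \<le> path_length p a t ^ k / fact k"
proof (induction k)
  case 0
  show ?case by (simp add: words_0 L2_set_def)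
next
  case (Suc k)
  show ?case
  proof
    fix t assume t: "t \<in> {a..b}"
    define E where "E = (Basis :: 'a set) \<times> (words k :: 'a list set)"
    have finE: "finite E" unfolding E_def by (rule finite_cartesian_product[OF finite_Basis words_finite])
    define X where "X e = sig_rev p a (fst e # snd e) t" for e
    define G where "G y = path_length p a y ^ Suc k / fact (Suc k)" for y
    have "L2_set X E \<le> path_length p a t ^ Suc k / fact (Suc k)"
    proof (rule field_le_epsilon)
      fix e :: real assume e: "e > 0"
      define \<epsilon> where "\<epsilon> = e / (sqrt (real (card E)) + 1)"
      have "sqrt (real (card E)) + 1 > 0" by (simp add: add_nonneg_pos)
      then have \<epsilon>: "\<epsilon> > 0" using e unfolding \<epsilon>_def by (rule divide_pos_pos[rotated])
      define Q where "Q e' \<delta> \<longleftrightarrow> (\<forall>S. spart a t S \<and> sfine S t \<delta> \<longrightarrow>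
           \<bar>LS (sig_rev p a (snd e')) (\<lambda>u. p u \<bullet> fst e') t S - X e'\<bar> \<le> \<epsilon>)" for e' \<delta>
      have "\<exists>\<delta>>0. \<forall>e'\<in>E. Q e' \<delta>"
      proof (rule finite_common_delta[OF finE])
        fix e' assume "e' \<in> E"
        then have "set (snd e') \<subseteq> Basis" "fst e' \<in> Basis" unfolding E_def words_def by auto
        then show "\<exists>\<delta>>0. Q e' \<delta>" using sig_char[of "snd e'" "fst e'" t] t \<epsilon> unfolding Q_def X_def by auto
      next
        fix e' \<delta> \<delta>' assume "Q e' \<delta>" "0 < \<delta>'" "\<delta>' \<le> \<delta>"
        then show "Q e' \<delta>'" unfolding Q_def using sfine_mono by blast
      qed
      then obtain \<delta> where d: "\<delta> > 0" "\<forall>e'\<in>E. Q e' \<delta>" by blast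
      obtain S where S: "spart a t S" "sfine S t \<delta>" using sfine_exists[of a t \<delta>] t d by auto
      have finS: "finite S" using S unfolding spart_def by simp
      define Y where "Y e' = LS (sig_rev p a (snd e')) (\<lambda>u. p u \<bullet> fst e') t S" for e'
      have XY: "\<bar>X e' - Y e'\<bar> \<le> \<epsilon>" if "e' \<in> E" for e'
        using d(2) that S unfolding Q_def Y_def by (auto simp: abs_minus_commute)
      have "L2_set X E \<le> L2_set Y E + L2_set (\<lambda>e'. X e' - Y e') E"
        using L2_set_triangle_ineq[of Y "\<lambda>e'. X e' - Y e'" E] by simp
      also have "L2_set (\<lambda>e'. X e' - Y e') E \<le> sqrt (real (card E)) * \<epsilon>"
        by (rule L2_set_small) (use XY in auto)
      also have "sqrt (real (card E)) * \<epsilon> \<le> e"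
      proof -
        have q: "0 < sqrt (real (card E)) + 1" by (simp add: add_nonneg_pos)
        have "sqrt (real (card E)) * \<epsilon> = e * (sqrt (real (card E)) / (sqrt (real (card E)) + 1))"
          by (simp add: \<epsilon>_def)
        also have "\<dots> \<le> e * 1"
          by (intro mult_left_mono) (use q e in \<open>auto simp: divide_le_eq_1\<close>)
        finally show ?thesis by simp
      qed
      also have "L2_set Y E \<le> path_length p a t ^ Suc k / fact (Suc k)"
      proof -
        define h where "h x e' = ((p (nx S x) - p x) \<bullet> fst e') * sig_rev p a (snd e') x" for x e'
        have Yh: "Y e' = (\<Sum>x\<in>S-{t}. h x e')" for e'
          unfolding Y_def LS_def SS_def h_def by (simp add: inner_diff_left mult.commute)
        have "L2_set Y E = L2_set (\<lambda>e'. \<Sum>x\<in>S-{t}. h x e') E" unfolding Yh ..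
        also have "\<dots> \<le> (\<Sum>x\<in>S-{t}. L2_set (h x) E)" by (rule L2_set_sum_le) (use finS in simp)
        also have "\<dots> \<le> (\<Sum>x\<in>S-{t}. G (nx S x) - G x)"
        proof (rule sum_mono)
          fix x assume x: "x \<in> S - {t}"
          have n: "nx S x \<in> S" "x < nx S x" using nx_props[OF S(1) x] by auto
          have r: "a \<le> x" "nx S x \<le> t" using S(1) x n unfolding spart_def by auto
          have xb: "x \<in> {a..b}" using r n t by auto
          have "L2_set (h x) E = L2_set (\<lambda>(i, w). ((p (nx S x) - p x) \<bullet> i) * sig_rev p a w x) (Basis \<times> words k)"
            unfolding E_def h_def by (rule L2_set_cong) auto
          also have "\<dots> = norm (p (nx S x) - p x) * L2_set (\<lambda>w. sig_rev p a w x) (words k)"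
            by (simp add: L2_set_product norm_L2_Basis)
          also have "\<dots> \<le> (path_length p a (nx S x) - path_length p a x) * (path_length p a x ^ k / fact k)"
          proof (rule mult_mono)
            show "norm (p (nx S x) - p x) \<le> path_length p a (nx S x) - path_length p a x"
              using path_length_mono[OF bv, of x "nx S x"] r n t by auto
            show "L2_set (\<lambda>w. sig_rev p a w x) (words k) \<le> path_length p a x ^ k / fact k"
              using Suc.IH xb by blast
            show "0 \<le> path_length p a (nx S x) - path_length p a x"
              using path_length_le[OF bv, of x "nx S x"] r n t by auto
          qed simp
          also have "\<dots> \<le> G (nx S x) - G x"
            unfolding G_def diff_divide_distrib[symmetric]
            by (rule power_step_ineq) (use path_length_nonneg[OF bv, of x] path_length_le[OF bv, of x "nx S x"] r n t in auto)
          finally show "L2_set (h x) E \<le> G (nx S x) - G x" .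
        qed
        also have "\<dots> = G t - G a" using SS_telescope[OF S(1), of G] unfolding SS_def .
        also have "\<dots> = path_length p a t ^ Suc k / fact (Suc k)"
          unfolding G_def using path_length_a[OF bv] by simp
        finally show ?thesis .
      qed
      finally show "L2_set X E \<le> path_length p a t ^ Suc k / fact (Suc k) + e" by simp
    qed
    moreover have "L2_set (\<lambda>w. sig_rev p a w t) (words (Suc k)) = L2_set X E"
      unfolding L2_words_Suc E_def X_def by (rule L2_set_cong) auto
    ultimately show "L2_set (\<lambda>w. sig_rev p a w t) (words (Suc k)) \<le> path_length p a t ^ Suc k / fact (Suc k)"
      by simp
  qed
qed

end

lemma sig_inner_bound:
  fixes \<gamma> \<sigma> :: "real \<Rightarrow> 'a::euclidean_space"
  assumes ab: "a \<le> b"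
    and "continuous_on {a..b} \<gamma>" and "continuous_on {a..b} \<sigma>"
    and "bounded_variation_on \<gamma> a b" and "bounded_variation_on \<sigma> a b"
    and s: "s \<in> {a..b}" and t: "t \<in> {a..b}"
  shows "\<bar>sig_inner \<gamma> \<sigma> a k s t\<bar> \<le> (path_length \<gamma> a s * path_length \<sigma> a t) ^ k / (fact k)\<^sup>2"
proof -
  have inj: "inj_on rev (words k :: 'a list set)" by (simp add: inj_on_def)
  have im: "rev ` (words k :: 'a list set) = words k"
  proof (intro set_eqI iffI)
    fix x assume "x \<in> rev ` (words k :: 'a list set)"
    then show "x \<in> words k" unfolding words_def by auto
  next
    fix x assume x: "x \<in> (words k :: 'a list set)"
    show "x \<in> rev ` words k" by (rule image_eqI[of _ _ "rev x"]) (use x in \<open>auto simp: words_def\<close>)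
  qed
  have "sig_inner \<gamma> \<sigma> a k s t = (\<Sum>w\<in>rev ` words k. sig_rev \<gamma> a w s * sig_rev \<sigma> a w t)"
    unfolding sig_inner_def sig_coord_def sum.reindex[OF inj] by simp
  also have "\<dots> = (\<Sum>w\<in>words k. sig_rev \<gamma> a w s * sig_rev \<sigma> a w t)" unfolding im ..
  finally have eq: "sig_inner \<gamma> \<sigma> a k s t = (\<Sum>w\<in>words k. sig_rev \<gamma> a w s * sig_rev \<sigma> a w t)" .
  have "\<bar>sig_inner \<gamma> \<sigma> a k s t\<bar> \<le> (\<Sum>w\<in>words k. \<bar>sig_rev \<gamma> a w s\<bar> * \<bar>sig_rev \<sigma> a w t\<bar>)"
    unfolding eq by (metis (no_types, lifting) abs_mult sum.cong sum_abs)
  also have "\<dots> \<le> L2_set (\<lambda>w. sig_rev \<gamma> a w s) (words k) * L2_set (\<lambda>w. sig_rev \<sigma> a w t) (words k)"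
    by (rule L2_set_mult_ineq)
  also have "\<dots> \<le> (path_length \<gamma> a s ^ k / fact k) * (path_length \<sigma> a t ^ k / fact k)"
    using sig_norm[OF ab assms(2,4)] sig_norm[OF ab assms(3,5)] s t
    by (intro mult_mono) (auto simp: path_length_nonneg[OF assms(4)] path_length_nonneg[OF assms(5)])
  also have "\<dots> = (path_length \<gamma> a s * path_length \<sigma> a t) ^ k / (fact k)\<^sup>2"
    by (simp add: power_mult_distrib power2_eq_square)
  finally show ?thesis .
qed



lemma ln_cubic:
  fixes x :: real
  assumes x: "0 \<le> x"
  shows "ln (1 + x) \<le> x - x^2/2 + x^3/3"
proof -
  define \<phi> where "\<phi> y = y - y^2/2 + y^3/3 - ln (1 + y)" for y :: real
  have "\<phi> 0 \<le> \<phi> x"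
  proof (rule DERIV_nonneg_imp_nondecreasing[OF x])
    fix y :: real assume y: "0 \<le> y" "y \<le> x"
    have d: "(\<phi> has_real_derivative (1 - y + y^2 - 1 / (1 + y))) (at y)"
      unfolding \<phi>_def using y
      by (auto intro!: derivative_eq_intros simp: power2_eq_square field_simps)
    have "1 - y + y^2 - 1 / (1 + y) = y^3 / (1 + y)"
      using y by (simp add: field_simps power2_eq_square power3_eq_cube)
    also have "\<dots> \<ge> 0" using y by simp
    finally show "\<exists>d. (\<phi> has_real_derivative d) (at y) \<and> 0 \<le> d" using d by blast
  qed
  then show ?thesis by (simp add: \<phi>_def)
qed

lemma one_plus_le_exp_cubic:
  fixes x :: real
  assumes "0 \<le> x"
  shows "1 + x \<le> exp (x - x^2/2 + x^3/3)"
proof -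
  have "1 + x = exp (ln (1 + x))" using assms by simp
  also have "\<dots> \<le> exp (x - x^2/2 + x^3/3)" using ln_cubic[OF assms] by simp
  finally show ?thesis .
qed

lemma poly_ineq:
  fixes x :: real
  assumes x: "1 \<le> x"
  shows "2/(x+1) - 2/x + 8/(3*x^2) + 3/(x+2) \<le> 3/x"
proof -
  have x0: "x > 0" using x by simp
  have e1: "2/(x+1) - 2/x = - (2/(x*(x+1)))" using x0 by (simp add: field_simps)
  have e2: "3/(x+2) - 3/x = - (6/(x*(x+2)))" using x0 by (simp add: field_simps)
  have i1: "1/x^2 \<le> 2/(x*(x+1))"
  proof -
    have "x*(x+1) \<le> x*(2*x)" using x0 x by (intro mult_left_mono) auto
    then have "2/(2*x^2) \<le> 2/(x*(x+1))" using x0 by (intro frac_le) (auto simp: power2_eq_square)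
    then show ?thesis by simp
  qed
  have i2: "2/x^2 \<le> 6/(x*(x+2))"
  proof -
    have "x*(x+2) \<le> x*(3*x)" using x0 x by (intro mult_left_mono) auto
    then have "6/(3*x^2) \<le> 6/(x*(x+2))" using x0 by (intro frac_le) (auto simp: power2_eq_square)
    then show ?thesis by simp
  qed
  have e3: "8/(3*x^2) = (8/3) * (1/x^2)" by simp
  have e4: "2/x^2 = 2 * (1/x^2)" by simp
  have "1/x^2 \<ge> 0" by simp
  then show ?thesis using e1 e2 i1 i2 e3 e4 by linarith
qed

lemma r2_alg: fixes x Gm F :: real assumes nz: "x + 2 \<noteq> 0"
  shows "(x + 2) / 2 * Gm / ((x + 2) * (x + 1) * F) = Gm / F / (2 * (x + 1))"
proof -
    have "(x + 2) / 2 * Gm / ((x + 2) * (x + 1) * F) = (x + 2) * (Gm / 2) / ((x + 2) * ((x + 1) * F))"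
      by (simp add: mult.assoc)
    also have "\<dots> = (Gm / 2) / ((x + 1) * F)" using nz by (rule mult_divide_mult_cancel_left)
    also have "\<dots> = Gm / (2 * ((x + 1) * F))" by (simp add: divide_divide_eq_left)
    also have "2 * ((x + 1) * F) = F * (2 * (x + 1))" by (simp add: algebra_simps)
    also have "Gm / (F * (2 * (x + 1))) = Gm / F / (2 * (x + 1))" by (simp add: divide_divide_eq_left)
    finally show ?thesis .
qed

lemma qk2_alg: fixes r a b P T Ex e1 :: real assumes "a \<noteq> 0" "e1 \<noteq> 0"
  shows "(r / (2 * a))^2 * ((2 * b / e1)^2 * P * T) * Ex =
     r^2 * P * (b^2 / a^2 * T * Ex / e1^2)"
  using assms by (simp add: field_simps power2_eq_square)

definition qg :: "nat \<Rightarrow> real" where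
  "qg k = (Gamma (real k / 2 + 1) / fact k)^2 * (2 * real k / exp 1)^k * exp (3 / real k)"

lemma Gamma_half_step: "Gamma (real (k + 2) / 2 + 1) = (real k / 2 + 1) * Gamma (real k / 2 + 1)"
proof -
  have z: "real k / 2 + 1 \<notin> \<int>\<^sub>\<le>\<^sub>0"
  proof
    assume "real k / 2 + 1 \<in> \<int>\<^sub>\<le>\<^sub>0"
    then have "real k / 2 + 1 \<le> 0" by (rule nonpos_Ints_nonpos)
    then show False by (simp add: add_nonneg_pos)
  qed
  have eq: "real (k + 2) / 2 + 1 = (real k / 2 + 1) + 1" by simp
  show ?thesis unfolding eq by (rule Gamma_plus1[OF z])
qed

lemma qg_step:
  assumes k: "k \<ge> 1"
  shows "qg (k + 2) \<le> qg k"
proof -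
  define x where "x = real k"
  have x: "x \<ge> 1" using k by (simp add: x_def)
  have x0: "x > 0" using x by simp
  define r where "r = Gamma (real k / 2 + 1) / fact k"
  have r2: "Gamma (real (k + 2) / 2 + 1) / fact (k + 2) = r / (2 * (x + 1))"
  proof -
    define Gm where "Gm = Gamma (real k / 2 + 1)"
    define F where "F = (fact k :: real)"
    have F0: "F > 0" by (simp add: F_def)
    have f2: "fact (k + 2) = (x + 2) * (x + 1) * F"
      by (simp add: x_def F_def fact_Suc algebra_simps numeral_2_eq_2)
    have g2: "Gamma (real (k + 2) / 2 + 1) = (x + 2) / 2 * Gm"
    proof -
      have h: "real k / 2 + 1 = (x + 2) / 2" by (simp add: x_def)
      show ?thesis unfolding Gamma_half_step Gm_def by (simp only: h)
    qed
    have nz: "(x + 2) * (x + 1) * F \<noteq> 0" "2 * (x + 1) \<noteq> 0" "F \<noteq> 0" "x + 2 \<noteq> 0"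
      using x0 F0 by auto
    show ?thesis unfolding f2 g2 r_def Gm_def[symmetric] F_def[symmetric] using nz(4) by (rule r2_alg)
  qed
  have pw: "(2 * (x + 2) / exp 1) ^ (k + 2) = (2 * (x + 2) / exp 1)^2 * (2 * x / exp 1)^k * ((x + 2) / x)^k"
  proof -
    have "2 * (x + 2) / exp 1 = (2 * x / exp 1) * ((x + 2) / x)" using x0 by (simp add: field_simps)
    then have E: "(2 * (x + 2) / exp 1) ^ k = (2 * x / exp 1)^k * ((x + 2) / x)^k"
      by (simp only: power_mult_distrib)
    have "(2 * (x + 2) / exp 1) ^ (k + 2) = (2 * (x + 2) / exp 1) ^ k * (2 * (x + 2) / exp 1)^2"
      by (rule power_add)
    then show ?thesis unfolding E by (simp only: mult_ac)
  qed
  have qk2: "qg (k + 2) = r^2 * (2 * x / exp 1)^k *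
     ((x + 2)^2 / (x + 1)^2 * ((x + 2) / x)^k * exp (3 / (x + 2)) / (exp 1)^2)"
  proof -
    have "qg (k + 2) = (r / (2 * (x + 1)))^2 * (2 * (x + 2) / exp 1) ^ (k + 2) * exp (3 / (x + 2))"
      unfolding qg_def r2 by (simp add: x_def add.commute)
    also have "\<dots> = r^2 * (2 * x / exp 1)^k *
     ((x + 2)^2 / (x + 1)^2 * ((x + 2) / x)^k * exp (3 / (x + 2)) / (exp 1)^2)"
      unfolding pw using x0 by (intro qk2_alg) auto
    finally show ?thesis .
  qed
  have qk: "qg k = r^2 * (2 * x / exp 1)^k * exp (3 / x)"
    unfolding qg_def r_def x_def ..
  have A: "(x + 2)^2 / (x + 1)^2 \<le> exp (2 / (x + 1))"
  proof -
    have "(x + 2) / (x + 1) = 1 + 1 / (x + 1)" using x0 by (simp add: field_simps)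
    also have "\<dots> \<le> exp (1 / (x + 1))" by (rule exp_ge_add_one_self)
    finally have "((x + 2) / (x + 1))^2 \<le> (exp (1 / (x + 1)))^2"
      using x0 by (intro power_mono) auto
    also have "(exp (1 / (x + 1)))^2 = exp (2 / (x + 1))"
      using exp_of_nat_mult[of 2 "1 / (x + 1)"] by simp
    finally show ?thesis by (simp add: power_divide)
  qed
  have B: "((x + 2) / x)^k \<le> exp (2 - 2/x + 8/(3*x^2))"
  proof -
    have "(x + 2) / x = 1 + 2/x" using x0 by (simp add: field_simps)
    also have "\<dots> \<le> exp (2/x - (2/x)^2/2 + (2/x)^3/3)"
      by (rule one_plus_le_exp_cubic) (use x0 in simp)
    finally have "((x + 2) / x)^k \<le> (exp (2/x - (2/x)^2/2 + (2/x)^3/3))^k"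
      using x0 by (intro power_mono) auto
    also have "\<dots> = exp (x * (2/x - (2/x)^2/2 + (2/x)^3/3))"
      using exp_of_nat_mult[of k "2/x - (2/x)^2/2 + (2/x)^3/3"] by (simp add: x_def)
    also have "x * (2/x - (2/x)^2/2 + (2/x)^3/3) = 2 - 2/x + 8/(3*x^2)"
      using x0 by (simp add: field_simps power2_eq_square power3_eq_cube)
    finally show ?thesis .
  qed
  have C: "(x + 2)^2 / (x + 1)^2 * ((x + 2) / x)^k * exp (3 / (x + 2)) / (exp 1)^2 \<le> exp (3 / x)"
  proof -
    have "(x + 2)^2 / (x + 1)^2 * ((x + 2) / x)^k * exp (3 / (x + 2)) / (exp 1)^2
          \<le> exp (2 / (x + 1)) * exp (2 - 2/x + 8/(3*x^2)) * exp (3 / (x + 2)) / (exp 1)^2"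
      using A B x0 by (intro divide_right_mono mult_right_mono mult_mono) auto
    also have "\<dots> = exp (2 / (x + 1) - 2/x + 8/(3*x^2) + 3 / (x + 2))"
    proof -
      have "(exp 1)^2 = exp (2::real)" using exp_of_nat_mult[of 2 "1::real"] by simp
      then show ?thesis by (simp add: exp_add[symmetric] exp_diff[symmetric])
    qed
    also have "\<dots> \<le> exp (3 / x)" using poly_ineq[OF x] by simp
    finally show ?thesis .
  qed
  have "0 \<le> r^2 * (2 * x / exp 1)^k" using x0 by simp
  then show ?thesis unfolding qk2 qk by (rule mult_left_mono[OF C])
qed

lemma qg_bound: "k \<ge> 1 \<Longrightarrow> qg k \<le> max (qg 1) (qg 2)"
proof (induction k rule: less_induct)
  case (less k)
  show ?case
  proof (cases "k \<le> 2")
    case True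
    then have "k = 1 \<or> k = 2" using less.prems by auto
    then show ?thesis by auto
  next
    case False
    have kj: "k = (k - 2) + 2" using False by simp
    have "qg ((k - 2) + 2) \<le> qg (k - 2)" by (rule qg_step) (use False in simp)
    then have "qg k \<le> qg (k - 2)" using kj by metis
    also have "\<dots> \<le> max (qg 1) (qg 2)" using less.IH[of "k - 2"] False by simp
    finally show ?thesis .
  qed
qed

lemma gamma_fact_bound:
  "\<exists>B>0. \<forall>k\<ge>1. Gamma (real k / 2 + 1) / fact k \<le> B * (exp 1 / (2 * real k)) powr (real k / 2)"
proof -
  define Q where "Q = max (qg 1) (qg 2)"
  define B where "B = sqrt (max Q 0) + 1"
  have B: "B > 0" unfolding B_def by (simp add: add_nonneg_pos)
  have "Gamma (real k / 2 + 1) / fact k \<le> B * (exp 1 / (2 * real k)) powr (real k / 2)"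
    if k: "k \<ge> 1" for k
  proof -
    define x where "x = real k"
    have x0: "x > 0" using k by (simp add: x_def)
    define r where "r = Gamma (real k / 2 + 1) / fact k"
    have r0: "r > 0" unfolding r_def by simp
    define c where "c = (exp 1 / (2 * x))^k"
    have c0: "c > 0" unfolding c_def using x0 by simp
    have "qg k = r^2 * (1 / c) * exp (3 / x)"
      unfolding qg_def r_def c_def x_def by (simp add: power_divide)
    moreover have "exp (3 / x) \<ge> 1" using x0 by simp
    moreover have "r^2 * (1 / c) * 1 \<le> r^2 * (1 / c) * exp (3 / x)"
      using r0 c0 \<open>exp (3 / x) \<ge> 1\<close> by (intro mult_left_mono) auto
    ultimately have "r^2 * (1 / c) \<le> qg k" by simp
    also have "\<dots> \<le> Q" using qg_bound[OF k] unfolding Q_def .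
    finally have "r^2 \<le> Q * c" using c0 by (simp add: field_simps)
    then have "r^2 \<le> max Q 0 * c" using c0 by (smt (verit) mult_right_mono)
    then have "r \<le> sqrt (max Q 0 * c)" using r0 by (simp add: real_le_rsqrt)
    also have "\<dots> = sqrt (max Q 0) * sqrt c" by (simp add: real_sqrt_mult)
    also have "\<dots> \<le> B * sqrt c" unfolding B_def using c0 by (intro mult_right_mono) auto
    also have "sqrt c = (exp 1 / (2 * x)) powr (x / 2)"
      unfolding c_def using x0 by (simp add: powr_half_sqrt_powr powr_realpow x_def)
    finally show ?thesis unfolding r_def x_def .
  qed
  then show ?thesis using B by blast
qed

lemma powr_decr:
  assumes "1 \<le> n" "n \<le> k"
  shows "(exp 1 / (2 * real k)) powr (real k / 2) \<le> (exp 1 / (2 * real n)) powr (real n / 2)"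
proof -
  have stp: "(exp 1 / (2 * real (Suc j)))^(Suc j) \<le> (exp 1 / (2 * real j))^j" if j: "j \<ge> 1" for j
  proof -
    define x where "x = real j"
    have x0: "x \<ge> 1" using j by (simp add: x_def)
    have "(exp 1 / (2 * (x + 1)))^(Suc j) = (exp 1 / (2 * (x + 1))) * (exp 1 / (2 * (x + 1)))^j" by simp
    also have "\<dots> \<le> 1 * (exp 1 / (2 * x))^j"
    proof (rule mult_mono)
      have "exp (1::real) \<le> 4" using exp_le by simp
      also have "4 \<le> 2 * (x + 1)" using x0 by simp
      finally show "exp 1 / (2 * (x + 1)) \<le> 1" using x0 by simp
      show "(exp 1 / (2 * (x + 1)))^j \<le> (exp 1 / (2 * x))^j"
        using x0 by (intro power_mono frac_le) auto
    qed (use x0 in auto)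
    finally show ?thesis by (simp add: x_def add.commute)
  qed
  have mono: "(exp 1 / (2 * real k))^k \<le> (exp 1 / (2 * real n))^n"
    using assms(2)
  proof (induction k rule: dec_induct)
    case base then show ?case by simp
  next
    case (step j)
    then show ?case using stp[of j] assms(1) by linarith
  qed
  have pk: "exp 1 / (2 * real k) > 0" "exp 1 / (2 * real n) > 0" using assms by auto
  have "(exp 1 / (2 * real k)) powr (real k / 2) = sqrt ((exp 1 / (2 * real k))^k)"
    using pk by (simp add: powr_half_sqrt_powr powr_realpow)
  also have "\<dots> \<le> sqrt ((exp 1 / (2 * real n))^n)" using mono by simp
  also have "\<dots> = (exp 1 / (2 * real n)) powr (real n / 2)"
    using pk by (simp add: powr_half_sqrt_powr powr_realpow)
  finally show ?thesis .
qed

lemma Gamma_shift_ge: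
  fixes m :: real
  assumes "m \<ge> 0"
  shows "Gamma (real k + m + 1) \<ge> fact k * Gamma (m + 1)"
proof (induction k)
  case 0 then show ?case by simp
next
  case (Suc k)
  have z: "real k + m + 1 \<notin> \<int>\<^sub>\<le>\<^sub>0"
  proof
    assume "real k + m + 1 \<in> \<int>\<^sub>\<le>\<^sub>0"
    then have "real k + m + 1 \<le> 0" by (rule nonpos_Ints_nonpos)
    then show False using assms by simp
  qed
  have "Gamma (real (Suc k) + m + 1) = (real k + m + 1) * Gamma (real k + m + 1)"
    using Gamma_plus1[OF z] by (simp add: add_ac)
  also have "\<dots> \<ge> (real k + 1) * (fact k * Gamma (m + 1))"
    using Suc assms by (intro mult_mono) auto
  finally show ?case by (simp add: algebra_simps)
qed



lemma tail_lemma: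
  fixes f u :: "nat \<Rightarrow> real"
  assumes c: "\<And>k. k \<ge> n \<Longrightarrow> \<bar>f k\<bar> \<le> u k" and su: "summable u"
  shows "summable f" and "\<bar>suminf f - (\<Sum>k<n. f k)\<bar> \<le> (\<Sum>j. u (j + n))"
proof -
  show sf: "summable f" by (rule summable_comparison_test'[OF su, of n]) (use c in simp)
  have e: "suminf f - (\<Sum>k<n. f k) = (\<Sum>j. f (j + n))"
    using suminf_split_initial_segment[OF sf, of n] by simp
  have s1: "summable (\<lambda>j. f (j + n))" by (rule summable_ignore_initial_segment[OF sf])
  have s2: "summable (\<lambda>j. u (j + n))" by (rule summable_ignore_initial_segment[OF su])
  have "(\<Sum>j. f (j + n)) \<le> (\<Sum>j. u (j + n))"
    by (rule suminf_le[OF _ s1 s2]) (use c in \<open>auto simp: abs_le_iff\<close>)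
  moreover have "(\<Sum>j. - u (j + n)) \<le> (\<Sum>j. f (j + n))"
  proof (rule suminf_le[OF _ summable_minus[OF s2] s1])
    fix j show "- u (j + n) \<le> f (j + n)" using c[of "j + n"] by (simp add: abs_le_iff)
  qed
  ultimately show "\<bar>suminf f - (\<Sum>k<n. f k)\<bar> \<le> (\<Sum>j. u (j + n))"
    unfolding e suminf_minus[OF s2] by (simp add: abs_le_iff)
qed

lemma exp_summable: "summable (\<lambda>k. (Y::real) ^ k / fact k)"
  using summable_exp[of Y] by (simp add: divide_inverse mult.commute)

lemma part1_bound:
  fixes c :: "nat \<Rightarrow> real" and X B :: real
  assumes X0: "0 \<le> X" and c: "\<And>k. \<bar>c k\<bar> \<le> X ^ k / (fact k)\<^sup>2"
    and B: "B > 0" "\<forall>k\<ge>1. Gamma (real k / 2 + 1) / fact k \<le> B * (exp 1 / (2 * real k)) powr (real k / 2)"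
    and n: "1 \<le> n" and k: "n \<le> k"
  shows "\<bar>Gamma (real k / 2 + 1) * c k\<bar> \<le> B * (exp 1 / (2 * real n)) powr (real n / 2) * (X ^ k / fact k)"
proof -
  have G0: "Gamma (real k / 2 + 1) > 0" by (simp add: add_nonneg_pos)
  have "\<bar>Gamma (real k / 2 + 1) * c k\<bar> = Gamma (real k / 2 + 1) * \<bar>c k\<bar>" using G0 by (simp add: abs_mult)
  also have "\<dots> \<le> Gamma (real k / 2 + 1) * (X ^ k / (fact k)\<^sup>2)" using G0 c by (intro mult_left_mono) auto
  also have "\<dots> = (Gamma (real k / 2 + 1) / fact k) * (X ^ k / fact k)" by (simp add: power2_eq_square)
  also have "\<dots> \<le> (B * (exp 1 / (2 * real k)) powr (real k / 2)) * (X ^ k / fact k)"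
    using B(2) n k X0 by (intro mult_right_mono) auto
  also have "\<dots> \<le> (B * (exp 1 / (2 * real n)) powr (real n / 2)) * (X ^ k / fact k)"
    using powr_decr[OF n k] B(1) X0 by (intro mult_right_mono mult_left_mono) auto
  finally show ?thesis .
qed

lemma part2_bound:
  fixes c :: "nat \<Rightarrow> real" and X m :: real
  assumes X0: "0 \<le> X" and c: "\<And>k. \<bar>c k\<bar> \<le> X ^ k / (fact k)\<^sup>2" and m: "0 \<le> m"
  shows "\<bar>Gamma (m + 1) * Gamma (real k + 1) / Gamma (real k + m + 1) * c k\<bar>
           \<le> Gamma (m + 1) * (X ^ k / (Gamma (real k + m + 1) * fact k))"
proof -
  have g1: "Gamma (m + 1) > 0" using m by (simp add: add_nonneg_pos)
  have g2: "Gamma (real k + m + 1) > 0" using m by (simp add: add_nonneg_pos)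
  have gf: "Gamma (real k + 1) = fact k" using Gamma_fact[of k] by (simp add: add.commute)
  define \<phi> where "\<phi> = Gamma (m + 1) * Gamma (real k + 1) / Gamma (real k + m + 1)"
  have p0: "\<phi> \<ge> 0" unfolding \<phi>_def using g1 g2 gf by simp
  have "\<bar>\<phi> * c k\<bar> = \<phi> * \<bar>c k\<bar>" using p0 by (simp add: abs_mult)
  also have "\<dots> \<le> \<phi> * (X ^ k / (fact k)\<^sup>2)" using p0 c by (intro mult_left_mono) auto
  also have "\<dots> = Gamma (m + 1) * (X ^ k / (Gamma (real k + m + 1) * fact k))"
    unfolding \<phi>_def gf by (simp add: power2_eq_square)
  finally show ?thesis unfolding \<phi>_def .
qed

lemma part2_summable:
  fixes X m :: real
  assumes X0: "0 \<le> X" and m: "0 \<le> m"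
  shows "summable (\<lambda>k. X ^ k / (Gamma (real k + m + 1) * fact k))"
proof (rule summable_comparison_test'[OF summable_mult[OF exp_summable[of X], of "1 / Gamma (m + 1)"], of 0])
  fix k :: nat
  have g1: "Gamma (m + 1) > 0" using m by (simp add: add_nonneg_pos)
  have g2: "Gamma (real k + m + 1) \<ge> fact k * Gamma (m + 1)" by (rule Gamma_shift_ge[OF m])
  have f1: "(fact k :: real) \<ge> 1" by simp
  have "Gamma (m + 1) * fact k \<le> Gamma (real k + m + 1) * fact k"
  proof -
    have "Gamma (m + 1) \<le> fact k * Gamma (m + 1)" using g1 f1 by simp
    then have "Gamma (m + 1) \<le> Gamma (real k + m + 1)" using g2 by linarith
    then show ?thesis by (simp add: mult_right_mono)
  qed
  then have "X ^ k / (Gamma (real k + m + 1) * fact k) \<le> X ^ k / (Gamma (m + 1) * fact k)"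
    using X0 g1 by (intro divide_left_mono) auto
  moreover have "X ^ k / (Gamma (real k + m + 1) * fact k) \<ge> 0"
  proof -
    have "fact k * Gamma (m + 1) > 0" using g1 by simp
    then have "Gamma (real k + m + 1) > 0" using g2 by linarith
    then show ?thesis using X0 by (intro divide_nonneg_pos mult_pos_pos) auto
  qed
  ultimately show "norm (X ^ k / (Gamma (real k + m + 1) * fact k)) \<le> 1 / Gamma (m + 1) * (X ^ k / fact k)"
    by simp
qed



theorem mainTheorem6:
  fixes \<gamma> \<sigma> :: "real \<Rightarrow> 'a::euclidean_space" and a b :: real
  assumes "a \<le> b"
    and "continuous_on {a..b} \<gamma>" and "continuous_on {a..b} \<sigma>"
    and "bounded_variation_on \<gamma> a b" and "bounded_variation_on \<sigma> a b"
  shows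
    "(let \<phi> = (\<lambda>k. Gamma (real k / 2 + 1)) in
       (\<forall>s\<in>{a..b}. \<forall>t\<in>{a..b}. phi_sig_kernel_welldef \<phi> \<gamma> \<sigma> a s t) \<and>
       (\<exists>C. \<forall>N. \<forall>s\<in>{a..b}. \<forall>t\<in>{a..b}.
          \<bar>phi_sig_kernel \<phi> \<gamma> \<sigma> a s t - phi_sig_kernel_trunc \<phi> N \<gamma> \<sigma> a s t\<bar>
            \<le> C * (exp 1 / (2 * real N + 2)) powr ((real N + 1) / 2)
                * exp_tail (N + 1) (path_length \<gamma> a s * path_length \<sigma> a t)))
     \<and>
     (\<forall>m::real. m \<ge> 0 \<longrightarrow>
       (let \<phi> = (\<lambda>k. Gamma (m + 1) * Gamma (real k + 1) / Gamma (real k + m + 1)) in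
         (\<forall>s\<in>{a..b}. \<forall>t\<in>{a..b}. phi_sig_kernel_welldef \<phi> \<gamma> \<sigma> a s t) \<and>
         (\<forall>N. \<forall>s\<in>{a..b}. \<forall>t\<in>{a..b}.
            \<bar>phi_sig_kernel \<phi> \<gamma> \<sigma> a s t - phi_sig_kernel_trunc \<phi> N \<gamma> \<sigma> a s t\<bar>
              \<le> Gamma (m + 1) / (path_length \<gamma> a s * path_length \<sigma> a t) powr (m / 2)
                * bessel_I_tail m (N + 1)
                    (2 * sqrt (path_length \<gamma> a s * path_length \<sigma> a t)))))"
proof -
  define X where "X s t = path_length \<gamma> a s * path_length \<sigma> a t" for s t
  have X0: "0 \<le> X s t" if "s \<in> {a..b}" "t \<in> {a..b}" for s t
    unfolding X_def using path_length_nonneg[OF assms(4), of s] path_length_nonneg[OF assms(5), of t] that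
    by auto
  have cb: "\<bar>sig_inner \<gamma> \<sigma> a k s t\<bar> \<le> X s t ^ k / (fact k)\<^sup>2" if "s \<in> {a..b}" "t \<in> {a..b}" for k s t
    unfolding X_def by (rule sig_inner_bound[OF assms that])
  obtain B where B: "B > 0" "\<forall>k\<ge>1. Gamma (real k / 2 + 1) / fact k \<le> B * (exp 1 / (2 * real k)) powr (real k / 2)"
    using gamma_fact_bound by blast
  have P1w: "phi_sig_kernel_welldef (\<lambda>k. Gamma (real k / 2 + 1)) \<gamma> \<sigma> a s t"
    if st: "s \<in> {a..b}" "t \<in> {a..b}" for s t
    unfolding phi_sig_kernel_welldef_def
  proof (rule tail_lemma(1))
    show "summable (\<lambda>k. B * (exp 1 / (2 * real (1::nat))) powr (real (1::nat) / 2) * (X s t ^ k / fact k))"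
      by (rule summable_mult[OF exp_summable])
    fix k :: nat assume "k \<ge> 1"
    then show "\<bar>Gamma (real k / 2 + 1) * sig_inner \<gamma> \<sigma> a k s t\<bar>
        \<le> B * (exp 1 / (2 * real (1::nat))) powr (real (1::nat) / 2) * (X s t ^ k / fact k)"
      by (intro part1_bound[OF X0[OF st] cb[OF st] B]) auto
  qed
  have P1b: "\<bar>phi_sig_kernel (\<lambda>k. Gamma (real k / 2 + 1)) \<gamma> \<sigma> a s t
              - phi_sig_kernel_trunc (\<lambda>k. Gamma (real k / 2 + 1)) N \<gamma> \<sigma> a s t\<bar>
            \<le> B * (exp 1 / (2 * real N + 2)) powr ((real N + 1) / 2) * exp_tail (N + 1) (X s t)"
    if st: "s \<in> {a..b}" "t \<in> {a..b}" for s t N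
  proof -
    define K where "K = B * (exp 1 / (2 * real (Suc N))) powr (real (Suc N) / 2)"
    have "\<bar>(\<Sum>k. Gamma (real k / 2 + 1) * sig_inner \<gamma> \<sigma> a k s t)
           - (\<Sum>k<Suc N. Gamma (real k / 2 + 1) * sig_inner \<gamma> \<sigma> a k s t)\<bar>
          \<le> (\<Sum>j. K * (X s t ^ (j + Suc N) / fact (j + Suc N)))"
    proof (rule tail_lemma(2))
      show "summable (\<lambda>k. K * (X s t ^ k / fact k))" by (rule summable_mult[OF exp_summable])
      fix k :: nat assume "k \<ge> Suc N"
      then show "\<bar>Gamma (real k / 2 + 1) * sig_inner \<gamma> \<sigma> a k s t\<bar> \<le> K * (X s t ^ k / fact k)"
        unfolding K_def by (intro part1_bound[OF X0[OF st] cb[OF st] B]) auto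
    qed
    also have "(\<Sum>j. K * (X s t ^ (j + Suc N) / fact (j + Suc N))) = K * exp_tail (N + 1) (X s t)"
      unfolding exp_tail_def
      by (subst suminf_mult[OF summable_ignore_initial_segment[OF exp_summable]]) simp
    also have "K = B * (exp 1 / (2 * real N + 2)) powr ((real N + 1) / 2)"
      unfolding K_def by (simp add: add.commute)
    finally show ?thesis
      unfolding phi_sig_kernel_def phi_sig_kernel_trunc_def lessThan_Suc_atMost .
  qed
  have P2w: "phi_sig_kernel_welldef (\<lambda>k. Gamma (m + 1) * Gamma (real k + 1) / Gamma (real k + m + 1)) \<gamma> \<sigma> a s t"
    if m: "m \<ge> 0" and st: "s \<in> {a..b}" "t \<in> {a..b}" for m s t
    unfolding phi_sig_kernel_welldef_def
  proof (rule tail_lemma(1)[of 0])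
    show "summable (\<lambda>k. Gamma (m + 1) * (X s t ^ k / (Gamma (real k + m + 1) * fact k)))"
      by (rule summable_mult[OF part2_summable[OF X0[OF st] m]])
    fix k :: nat
    show "\<bar>Gamma (m + 1) * Gamma (real k + 1) / Gamma (real k + m + 1) * sig_inner \<gamma> \<sigma> a k s t\<bar>
        \<le> Gamma (m + 1) * (X s t ^ k / (Gamma (real k + m + 1) * fact k))"
      by (rule part2_bound[OF X0[OF st] cb[OF st] m])
  qed
  have P2b: "\<bar>phi_sig_kernel (\<lambda>k. Gamma (m + 1) * Gamma (real k + 1) / Gamma (real k + m + 1)) \<gamma> \<sigma> a s t
      - phi_sig_kernel_trunc (\<lambda>k. Gamma (m + 1) * Gamma (real k + 1) / Gamma (real k + m + 1)) N \<gamma> \<sigma> a s t\<bar>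
      \<le> Gamma (m + 1) / (X s t) powr (m / 2) * bessel_I_tail m (N + 1) (2 * sqrt (X s t))"
    if m: "m \<ge> 0" and st: "s \<in> {a..b}" "t \<in> {a..b}" for m s t N
  proof -
    define w where "w k = X s t ^ k / (Gamma (real k + m + 1) * fact k)" for k
    have sw: "summable w" unfolding w_def by (rule part2_summable[OF X0[OF st] m])
    have "\<bar>(\<Sum>k. Gamma (m + 1) * Gamma (real k + 1) / Gamma (real k + m + 1) * sig_inner \<gamma> \<sigma> a k s t)
           - (\<Sum>k<Suc N. Gamma (m + 1) * Gamma (real k + 1) / Gamma (real k + m + 1) * sig_inner \<gamma> \<sigma> a k s t)\<bar>
          \<le> (\<Sum>j. Gamma (m + 1) * w (j + Suc N))"
    proof (rule tail_lemma(2))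
      show "summable (\<lambda>k. Gamma (m + 1) * w k)" by (rule summable_mult[OF sw])
      fix k :: nat
      show "\<bar>Gamma (m + 1) * Gamma (real k + 1) / Gamma (real k + m + 1) * sig_inner \<gamma> \<sigma> a k s t\<bar>
          \<le> Gamma (m + 1) * w k"
        unfolding w_def by (rule part2_bound[OF X0[OF st] cb[OF st] m])
    qed
    also have "(\<Sum>j. Gamma (m + 1) * w (j + Suc N)) = Gamma (m + 1) * (\<Sum>j. w (j + Suc N))"
      by (rule suminf_mult[OF summable_ignore_initial_segment[OF sw]])
    also have "\<dots> \<le> Gamma (m + 1) / (X s t) powr (m / 2) * bessel_I_tail m (N + 1) (2 * sqrt (X s t))"
    proof (cases "X s t = 0")
      case True
      have "w (j + Suc N) = 0" for j unfolding w_def True by simp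
      then show ?thesis using True by (simp add: bessel_I_tail_def)
    next
      case False
      then have Xp: "X s t > 0" using X0[OF st] by simp
      have gf: "Gamma (real n + 1) = fact n" for n using Gamma_fact[of n] by (simp add: add.commute)
      have sq: "(2 * sqrt (X s t))\<^sup>2 / 4 = X s t" using Xp by (simp add: power_mult_distrib)
      have sq2: "(2 * sqrt (X s t) / 2) powr m = (X s t) powr (m / 2)"
      proof -
        have "2 * sqrt (X s t) / 2 = (X s t) powr (1/2)" using Xp by (simp add: powr_half_sqrt)
        then show ?thesis by (simp add: powr_powr)
      qed
      have "bessel_I_tail m (N + 1) (2 * sqrt (X s t)) = (X s t) powr (m / 2) * (\<Sum>j. w (j + Suc N))"
        unfolding bessel_I_tail_def sq sq2 w_def gf by simp
      then show ?thesis using Xp by simp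
    qed
    finally show ?thesis
      unfolding phi_sig_kernel_def phi_sig_kernel_trunc_def lessThan_Suc_atMost .
  qed
  show ?thesis
    unfolding Let_def
    using P1w P1b P2w P2b unfolding X_def by blast
qed


end
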